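(* Let $D$ be an integral domain and $\star$ a semistar operation on $D$. The following are equivalent: (i) for every overring $T$ of $D$ and every semistar operation $\star'$ on $T$ such that $T$ is $(\star,\star')$-linked to $D$, the ring $T^{\widetilde{\star'}}$ is integrally closed; (ii) for every overring $T$ of $D$, $T^{\ell_{\star,T}}$ is integrally closed; (iii) every overring of $D$ that is $t$-linked to $(D,\star)$ is integrally closed; (iv) every overring $T$ of $D$ that is $(\star,d_T)$-linked to $D$ is integrally closed; (v) $D^{\tilde\star}$ is integrally closed and, for every overring $T$ and every semistar operation $\star'$ on $T$ such that $T$ is $(\star,\star')$-linked to $D$, $T^{\widetilde{\star'}}$ is seminormal; (vi) $D^{\tilde\star}$ is integrally closed and every overring of $D$ that is $t$-linked to $(D,\star)$ is seminormal; (vii) $D^{\tilde\star}$ is integrally closed and every overring $T$ of $D$ that is $(\star,d_T)$-linked to $D$ is seminormal; (viii) $D$ is a P$\star$MD.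
   Context: Let $D$ be an integral domain with quotient field $K$. $\overline{\mathbf F}(D)$ denotes the set of all nonzero $D$-submodules of $K$ and $\mathbf f(D)$ the set of nonzero finitely generated $D$-submodules of $K$. A semistar operation on $D$ is a map $\star:\overline{\mathbf F}(D)\to\overline{\mathbf F}(D)$, $E\mapsto E^\star$, such that for all $0\ne x\in K$ and $E,F\in\overline{\mathbf F}(D)$: (1) $(xE)^\star=xE^\star$; (2) $E\subseteq F\Rightarrow E^\star\subseteq F^\star$; (3) $E\subseteq E^\star$ and $(E^\star)^\star=E^\star$. $\star_f$ is defined by $E^{\star_f}=\bigcup\{F^\star:F\in\mathbf f(D),F\subseteq E\}$. A nonzero ideal $I$ of $D$ is a quasi-$\star$-ideal if $I^\star\cap D=I$; a quasi-$\star$-prime is a prime quasi-$\star$-ideal; a quasi-$\star$-maximal ideal is a maximal element among proper quasi-$\star$-ideals; $\mathcal M(\star_f)$ is the set of quasi-$\star_f$-maximal ideals and $E^{\tilde\star}=\bigcap\{ED_Q:Q\in\mathcal M(\star_f)\}$ (equal to $K$ if $\mathcal M(\star_f)=\emptyset$). An overring of $D$ is a ring $T$ with $D\subseteq T\subseteq K$; all notions are defined analogously on $T$. $d_T$ is the identity operation on $T$; $v_T$ is $E\mapsto(T:_K(T:_KE))$ and $t_T:=(v_T)_f$. $T$ is $(\star,\star')$-linked to $D$ if for every nonzero finitely generated ideal $F\subseteq D$ with $F^\star=D^\star$ one has $(FT)^{\star'}=T^{\star'}$; $T$ is $t$-linked to $(D,\star)$ if it is $(\star,t_T)$-linked to $D$.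 The semistar operation $\ell_{\star,T}$ on $T$ is $E^{\ell_{\star,T}}=\bigcap\{ET_{D\setminus P}:P$ a quasi-$\star_f$-prime of $D\}$. $D$ is a P$\star$MD (Prüfer $\star$-multiplication domain) if every $F\in\mathbf f(D)$ satisfies $(FF^{-1})^{\star_f}=D^\star$, where $F^{-1}=(D:_KF)$. A domain $R$ with quotient field $K$ is seminormal if every $x\in K$ with $x^2,x^3\in R$ lies in $R$. *)

theory Defs
  imports "HOL-Computational_Algebra.Polynomial"
begin

text \<open>The quotient field K is modelled as the type 'K (a field); an integral domain D
  with quotient field K is a subring of 'K every element of which is a fraction a/b
  with a, b in D.\<close>

definition subring :: "'K::field set \<Rightarrow> bool" where
  "subring R \<longleftrightarrow> 0 \<in> R \<and> 1 \<in> R \<and> (\<forall>x\<in>R. \<forall>y\<in>R. x + y \<in> R \<and> x - y \<in> R \<and> x * y \<in> R)"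

definition domain_with_qf :: "'K::field set \<Rightarrow> bool" where
  "domain_with_qf D \<longleftrightarrow> subring D \<and> (\<forall>x. \<exists>a\<in>D. \<exists>b\<in>D. b \<noteq> 0 \<and> x = a / b)"

definition overring :: "'K::field set \<Rightarrow> 'K set \<Rightarrow> bool" where
  "overring D T \<longleftrightarrow> subring T \<and> D \<subseteq> T"

definition submod :: "'K::field set \<Rightarrow> 'K set \<Rightarrow> bool" where
  "submod T E \<longleftrightarrow> 0 \<in> E \<and> (\<forall>x\<in>E. \<forall>y\<in>E. x + y \<in> E) \<and> (\<forall>t\<in>T. \<forall>x\<in>E. t * x \<in> E)"

definition Fbar :: "'K::field set \<Rightarrow> 'K set set" where
  "Fbar T = {E. submod T E \<and> E \<noteq> {0}}"

definition span :: "'K::field set \<Rightarrow> 'K set \<Rightarrow> 'K set" where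
  "span T S = {\<Sum>s\<in>S. c s * s | c. \<forall>s. c s \<in> T}"

definition fgF :: "'K::field set \<Rightarrow> 'K set set" where
  "fgF T = {E \<in> Fbar T. \<exists>S. finite S \<and> E = span T S}"

definition setprod :: "'K::field set \<Rightarrow> 'K set \<Rightarrow> 'K set" where
  "setprod E F = {sum_list (map (\<lambda>(e, f). e * f) l) | l. set l \<subseteq> E \<times> F}"

definition semistar :: "'K::field set \<Rightarrow> ('K set \<Rightarrow> 'K set) \<Rightarrow> bool" where
  "semistar T st \<longleftrightarrow>
     (\<forall>E\<in>Fbar T. st E \<in> Fbar T) \<and>
     (\<forall>x E. x \<noteq> 0 \<longrightarrow> E \<in> Fbar T \<longrightarrow> st ((*) x ` E) = (*) x ` st E) \<and>
     (\<forall>E\<in>Fbar T. \<forall>F\<in>Fbar T. E \<subseteq> F \<longrightarrow> st E \<subseteq> st F) \<and>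
     (\<forall>E\<in>Fbar T. E \<subseteq> st E \<and> st (st E) = st E)"

definition star_f :: "'K::field set \<Rightarrow> ('K set \<Rightarrow> 'K set) \<Rightarrow> 'K set \<Rightarrow> 'K set" where
  "star_f T st E = \<Union> {st F | F. F \<in> fgF T \<and> F \<subseteq> E}"

definition ideal_of :: "'K::field set \<Rightarrow> 'K set \<Rightarrow> bool" where
  "ideal_of T I \<longleftrightarrow> submod T I \<and> I \<subseteq> T"

definition quasi_ideal :: "'K::field set \<Rightarrow> ('K set \<Rightarrow> 'K set) \<Rightarrow> 'K set \<Rightarrow> bool" where
  "quasi_ideal T st I \<longleftrightarrow> ideal_of T I \<and> I \<noteq> {0} \<and> st I \<inter> T = I"

definition prime_of :: "'K::field set \<Rightarrow> 'K set \<Rightarrow> bool" where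
  "prime_of T P \<longleftrightarrow> ideal_of T P \<and> P \<noteq> T \<and>
     (\<forall>x\<in>T. \<forall>y\<in>T. x * y \<in> P \<longrightarrow> x \<in> P \<or> y \<in> P)"

definition quasi_prime :: "'K::field set \<Rightarrow> ('K set \<Rightarrow> 'K set) \<Rightarrow> 'K set \<Rightarrow> bool" where
  "quasi_prime T st P \<longleftrightarrow> quasi_ideal T st P \<and> prime_of T P"

definition quasi_max :: "'K::field set \<Rightarrow> ('K set \<Rightarrow> 'K set) \<Rightarrow> 'K set \<Rightarrow> bool" where
  "quasi_max T st Q \<longleftrightarrow> quasi_ideal T st Q \<and> Q \<noteq> T \<and>
     (\<forall>I. quasi_ideal T st I \<and> I \<noteq> T \<and> Q \<subseteq> I \<longrightarrow> I = Q)"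

definition fracs :: "'K::field set \<Rightarrow> 'K set \<Rightarrow> 'K set" where
  "fracs T S = {t / s | t s. t \<in> T \<and> s \<in> S}"

text \<open>E^{tilde star} = intersection of E T_Q over quasi-star_f-maximal Q (K if none)\<close>
definition stilde :: "'K::field set \<Rightarrow> ('K set \<Rightarrow> 'K set) \<Rightarrow> 'K set \<Rightarrow> 'K set" where
  "stilde T st E = \<Inter> {setprod E (fracs T (T - Q)) | Q. quasi_max T (star_f T st) Q}"

definition colon :: "'K::field set \<Rightarrow> 'K set \<Rightarrow> 'K set" where
  "colon T E = {x. \<forall>e\<in>E. x * e \<in> T}"

definition v_op :: "'K::field set \<Rightarrow> 'K set \<Rightarrow> 'K set" where
  "v_op T E = colon T (colon T E)"

definition t_op :: "'K::field set \<Rightarrow> 'K set \<Rightarrow> 'K set" where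
  "t_op T = star_f T (v_op T)"

definition d_op :: "'K::field set \<Rightarrow> 'K set \<Rightarrow> 'K set" where
  "d_op T = (\<lambda>E. E)"

definition linked :: "'K::field set \<Rightarrow> ('K set \<Rightarrow> 'K set) \<Rightarrow> 'K set \<Rightarrow> ('K set \<Rightarrow> 'K set) \<Rightarrow> bool" where
  "linked D st T st' \<longleftrightarrow>
     (\<forall>F. F \<in> fgF D \<and> F \<subseteq> D \<and> st F = st D \<longrightarrow> st' (setprod F T) = st' T)"

definition t_linked :: "'K::field set \<Rightarrow> ('K set \<Rightarrow> 'K set) \<Rightarrow> 'K set \<Rightarrow> bool" where
  "t_linked D st T \<longleftrightarrow> linked D st T (t_op T)"

definition ell_op :: "'K::field set \<Rightarrow> ('K set \<Rightarrow> 'K set) \<Rightarrow> 'K set \<Rightarrow> 'K set \<Rightarrow> 'K set" where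
  "ell_op D st T E = \<Inter> {setprod E (fracs T (D - P)) | P. quasi_prime D (star_f D st) P}"

definition PstarMD :: "'K::field set \<Rightarrow> ('K set \<Rightarrow> 'K set) \<Rightarrow> bool" where
  "PstarMD D st \<longleftrightarrow> (\<forall>F\<in>fgF D. star_f D st (setprod F (colon D F)) = st D)"

definition integrally_closed :: "'K::field set \<Rightarrow> bool" where
  "integrally_closed R \<longleftrightarrow>
     (\<forall>x. (\<exists>p. lead_coeff p = 1 \<and> (\<forall>i. coeff p i \<in> R) \<and> poly p x = 0) \<longrightarrow> x \<in> R)"

definition seminormal :: "'K::field set \<Rightarrow> bool" where
  "seminormal R \<longleftrightarrow> (\<forall>x. x ^ 2 \<in> R \<and> x ^ 3 \<in> R \<longrightarrow> x \<in> R)"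

end

theory Submission
  imports Defs
begin

lemma subring_0: "subring R \<Longrightarrow> 0 \<in> R" by (simp add: subring_def)
lemma subring_1: "subring R \<Longrightarrow> 1 \<in> R" by (simp add: subring_def)
lemma subring_add: "subring R \<Longrightarrow> x \<in> R \<Longrightarrow> y \<in> R \<Longrightarrow> x + y \<in> R" by (simp add: subring_def)
lemma subring_diff: "subring R \<Longrightarrow> x \<in> R \<Longrightarrow> y \<in> R \<Longrightarrow> x - y \<in> R" by (simp add: subring_def)
lemma subring_mult: "subring R \<Longrightarrow> x \<in> R \<Longrightarrow> y \<in> R \<Longrightarrow> x * y \<in> R" by (simp add: subring_def)
lemma subring_uminus: "subring R \<Longrightarrow> x \<in> R \<Longrightarrow> - x \<in> R"
  using subring_diff[of R 0 x] subring_0 by auto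
lemma subring_sum: "subring R \<Longrightarrow> (\<And>i. i \<in> A \<Longrightarrow> f i \<in> R) \<Longrightarrow> sum f A \<in> R"
  by (induct A rule: infinite_finite_induct) (auto simp: subring_0 subring_add)
lemma subring_prod: "subring R \<Longrightarrow> (\<And>i. i \<in> A \<Longrightarrow> f i \<in> R) \<Longrightarrow> prod f A \<in> R"
  by (induct A rule: infinite_finite_induct) (auto simp: subring_1 subring_mult)
lemma subring_power: "subring R \<Longrightarrow> x \<in> R \<Longrightarrow> x ^ n \<in> R"
  by (induct n) (auto simp: subring_1 subring_mult)
lemma subring_submod: "subring R \<Longrightarrow> submod R R"
  by (simp add: submod_def subring_def)
lemma subring_Fbar: "subring (R::'K::field set) \<Longrightarrow> R \<in> Fbar R"
  using subring_1[of R] by (auto simp: Fbar_def subring_submod)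

lemma submod_0: "submod R E \<Longrightarrow> 0 \<in> E" by (simp add: submod_def)
lemma submod_add: "submod R E \<Longrightarrow> x \<in> E \<Longrightarrow> y \<in> E \<Longrightarrow> x + y \<in> E" by (simp add: submod_def)
lemma submod_mult: "submod R E \<Longrightarrow> t \<in> R \<Longrightarrow> x \<in> E \<Longrightarrow> t * x \<in> E" by (simp add: submod_def)
lemma submod_sum: "submod R E \<Longrightarrow> (\<And>i. i \<in> A \<Longrightarrow> f i \<in> E) \<Longrightarrow> sum f A \<in> E"
  by (induct A rule: infinite_finite_induct) (auto simp: submod_0 submod_add)

lemma ideal_one: "ideal_of R I \<Longrightarrow> 1 \<in> I \<Longrightarrow> I = R"
  unfolding ideal_of_def submod_def by force

lemma span_memI: "\<forall>s. c s \<in> R \<Longrightarrow> z = (\<Sum>s\<in>S. c s * s) \<Longrightarrow> z \<in> span R S"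
  unfolding span_def by blast

lemma span_memE: "z \<in> span R S \<Longrightarrow> (\<And>c. \<forall>s. c s \<in> R \<Longrightarrow> z = (\<Sum>s\<in>S. c s * s) \<Longrightarrow> P) \<Longrightarrow> P"
  unfolding span_def by blast

lemma span_sub: "submod R J \<Longrightarrow> S \<subseteq> J \<Longrightarrow> span R S \<subseteq> J"
  unfolding span_def by (auto intro!: submod_sum submod_mult)

lemma span_mem:
  assumes "finite S" "s \<in> S" "subring R" shows "s \<in> span R S"
proof -
  have "(\<Sum>x\<in>S. (if x = s then 1 else 0) * x) = s"
    using assms by (simp add: if_distrib[of "\<lambda>c. c * _"] sum.delta cong: if_cong)
  moreover have "\<forall>x. (if x = s then 1 else 0) \<in> R" using assms by (simp add: subring_0 subring_1)
  ultimately show ?thesis by (intro span_memI) auto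
qed

lemma span_submod: assumes "subring R" shows "submod R (span R S)"
proof -
  have "0 \<in> span R S" unfolding span_def
    by (rule CollectI, rule exI[of _ "\<lambda>_. 0"]) (simp add: subring_0 assms)
  moreover have "x + y \<in> span R S" if xy: "x \<in> span R S" "y \<in> span R S" for x y
  proof -
    obtain c where c: "x = (\<Sum>s\<in>S. c s * s)" "\<forall>s. c s \<in> R" using xy(1) by (rule span_memE) auto
    obtain d where d: "y = (\<Sum>s\<in>S. d s * s)" "\<forall>s. d s \<in> R" using xy(2) by (rule span_memE) auto
    have "x + y = (\<Sum>s\<in>S. (c s + d s) * s)" by (simp add: c d sum.distrib algebra_simps)
    moreover have "\<forall>s. c s + d s \<in> R" using c d assms by (simp add: subring_add)
    ultimately show ?thesis by (intro span_memI) auto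
  qed
  moreover have "t * x \<in> span R S" if tx: "t \<in> R" "x \<in> span R S" for t x
  proof -
    obtain c where c: "x = (\<Sum>s\<in>S. c s * s)" "\<forall>s. c s \<in> R"
      using tx(2) by (rule span_memE) auto
    have "t * x = (\<Sum>s\<in>S. (t * c s) * s)" by (simp add: c sum_distrib_left algebra_simps)
    moreover have "\<forall>s. t * c s \<in> R" using c assms tx by (simp add: subring_mult)
    ultimately show ?thesis by (intro span_memI) auto
  qed
  ultimately show ?thesis unfolding submod_def by blast
qed

lemma span_mono: "S \<subseteq> S' \<Longrightarrow> finite S' \<Longrightarrow> subring R \<Longrightarrow> span R S \<subseteq> span R S'"
  by (rule span_sub[OF span_submod]) (auto intro: span_mem finite_subset)

lemma span_nonzero: "finite S \<Longrightarrow> subring R \<Longrightarrow> s \<in> S \<Longrightarrow> s \<noteq> 0 \<Longrightarrow> span R S \<noteq> {0}"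
  using span_mem by blast

lemma span_zero: "subring R \<Longrightarrow> span R S \<noteq> {0} \<Longrightarrow> \<exists>s\<in>S. s \<noteq> 0"
proof (rule ccontr)
  assume r: "subring R" and a: "span R S \<noteq> {0}" "\<not> (\<exists>s\<in>S. s \<noteq> 0)"
  have "span R S \<subseteq> {0}" using a(2) by (auto elim!: span_memE intro!: sum.neutral)
  moreover have "0 \<in> span R S" unfolding span_def using a(2)
    using r by (auto intro!: exI[of _ "\<lambda>_. 0"] simp: subring_0)
  ultimately show False using a(1) by blast
qed

lemma fgF_span: "finite S \<Longrightarrow> subring R \<Longrightarrow> s \<in> S \<Longrightarrow> s \<noteq> 0 \<Longrightarrow> span R S \<in> fgF R"
  unfolding fgF_def Fbar_def using span_submod span_nonzero by blast

lemma fgF_D: "G \<in> fgF R \<Longrightarrow> \<exists>S. finite S \<and> G = span R S \<and> G \<noteq> {0} \<and> submod R G"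
  unfolding fgF_def Fbar_def by auto

lemma fgF_Fbar: "G \<in> fgF R \<Longrightarrow> G \<in> Fbar R" unfolding fgF_def by auto

lemma span_scale:
  fixes y :: "'K::field"
  assumes "y \<noteq> 0"
  shows "span R ((*) y ` S) = (*) y ` span R S"
proof -
  have inj: "inj_on ((*) y) S" using assms by (auto simp: inj_on_def)
  show ?thesis
  proof
    show "span R ((*) y ` S) \<subseteq> (*) y ` span R S"
    proof
      fix z assume "z \<in> span R ((*) y ` S)"
      then obtain c where c: "z = (\<Sum>s\<in>(*) y ` S. c s * s)" "\<forall>s. c s \<in> R" by (rule span_memE) auto
      have "z = (\<Sum>s\<in>S. c (y * s) * (y * s))" by (simp add: c sum.reindex[OF inj])
      also have "\<dots> = y * (\<Sum>s\<in>S. c (y * s) * s)" by (simp add: sum_distrib_left algebra_simps)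
      finally have "z = y * (\<Sum>s\<in>S. c (y * s) * s)" .
      moreover have "(\<Sum>s\<in>S. c (y * s) * s) \<in> span R S" using c(2) by (intro span_memI) auto
      ultimately show "z \<in> (*) y ` span R S" by blast
    qed
  next
    show "(*) y ` span R S \<subseteq> span R ((*) y ` S)"
    proof
      fix z assume "z \<in> (*) y ` span R S"
      then obtain w where w: "w \<in> span R S" "z = y * w" by blast
      then obtain c where c: "w = (\<Sum>s\<in>S. c s * s)" "\<forall>s. c s \<in> R" by (auto elim!: span_memE)
      define c' where "c' = (\<lambda>s. c (s / y))"
      have "(\<Sum>s\<in>(*) y ` S. c' s * s) = (\<Sum>s\<in>S. c' (y * s) * (y * s))" by (simp add: sum.reindex[OF inj])
      also have "\<dots> = y * w" using assms by (simp add: c c'_def sum_distrib_left algebra_simps)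
      finally have "z = (\<Sum>s\<in>(*) y ` S. c' s * s)" using w by simp
      moreover have "\<forall>s. c' s \<in> R" using c(2) by (simp add: c'_def)
      ultimately show "z \<in> span R ((*) y ` S)" by (intro span_memI) auto
    qed
  qed
qed

lemma setprod_sub:
  assumes "\<And>e f. e \<in> E \<Longrightarrow> f \<in> F \<Longrightarrow> e * f \<in> W" "0 \<in> W" "\<And>x y. x \<in> W \<Longrightarrow> y \<in> W \<Longrightarrow> x + y \<in> W"
  shows "setprod E F \<subseteq> W"
proof
  fix z assume "z \<in> setprod E F"
  then obtain l where l: "z = sum_list (map (\<lambda>(e, f). e * f) l)" "set l \<subseteq> E \<times> F"
    unfolding setprod_def by blast
  have "sum_list (map (\<lambda>(e, f). e * f) l) \<in> W" using l(2)
    by (induct l) (auto simp: assms)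
  then show "z \<in> W" using l by simp
qed

lemma setprod_prod: "e \<in> E \<Longrightarrow> f \<in> F \<Longrightarrow> e * f \<in> setprod E F"
  unfolding setprod_def by (rule CollectI, rule exI[of _ "[(e,f)]"]) auto

lemma setprod_zero: "0 \<in> setprod E F"
  unfolding setprod_def by (rule CollectI, rule exI[of _ "[]"]) auto

lemma setprod_add: "x \<in> setprod E F \<Longrightarrow> y \<in> setprod E F \<Longrightarrow> x + y \<in> setprod E F"
proof -
  assume "x \<in> setprod E F" "y \<in> setprod E F"
  then obtain l m where "x = sum_list (map (\<lambda>(e, f). e * f) l)" "set l \<subseteq> E \<times> F"
     "y = sum_list (map (\<lambda>(e, f). e * f) m)" "set m \<subseteq> E \<times> F" unfolding setprod_def by blast
  then show ?thesis unfolding setprod_def by (intro CollectI exI[of _ "l @ m"]) auto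
qed

lemma setprod_sum: "(\<And>i. i \<in> A \<Longrightarrow> g i \<in> setprod E F) \<Longrightarrow> sum g A \<in> setprod E F"
  by (induct A rule: infinite_finite_induct) (auto simp: setprod_zero setprod_add)

lemma setprod_lmult:
  assumes "\<And>e. e \<in> E \<Longrightarrow> t * e \<in> E" "z \<in> setprod E F"
  shows "t * z \<in> setprod E F"
proof -
  obtain l where l: "z = sum_list (map (\<lambda>(e, f). e * f) l)" "set l \<subseteq> E \<times> F"
    using assms(2) unfolding setprod_def by blast
  have "t * sum_list (map (\<lambda>(e, f). e * f) l) \<in> setprod E F" using l(2)
  proof (induct l)
    case Nil then show ?case by (simp add: setprod_zero)
  next
    case (Cons a l)
    obtain e f where a: "a = (e, f)" by fastforce
    have "t * sum_list (map (\<lambda>(e, f). e * f) (a # l)) = (t * e) * f + t * sum_list (map (\<lambda>(e, f). e * f) l)"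
      by (simp add: a algebra_simps)
    moreover have "(t * e) * f \<in> setprod E F" using Cons(2) a assms(1) by (auto intro!: setprod_prod)
    ultimately show ?case using Cons by (auto intro: setprod_add)
  qed
  then show ?thesis using l by simp
qed

lemma setprod_ring_eq:
  assumes "subring W" "T \<subseteq> W" "1 \<in> T"
  shows "setprod T W = W"
proof
  show "setprod T W \<subseteq> W" by (rule setprod_sub) (use assms in \<open>auto simp: subring_0 subring_add subring_mult\<close>)
  show "W \<subseteq> setprod T W" using setprod_prod[of 1 T _ W] assms by auto
qed

lemma setprod_uminus:
  assumes "\<And>e. e \<in> E \<Longrightarrow> - e \<in> E" "z \<in> setprod E F" shows "- z \<in> setprod E F"
  using setprod_lmult[of E "-1" z F] assms by simp

lemma ss_Fbar: "semistar R st \<Longrightarrow> E \<in> Fbar R \<Longrightarrow> st E \<in> Fbar R" by (simp add: semistar_def)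
lemma ss_mult: "semistar R st \<Longrightarrow> x \<noteq> 0 \<Longrightarrow> E \<in> Fbar R \<Longrightarrow> st ((*) x ` E) = (*) x ` st E"
  by (simp add: semistar_def)
lemma ss_mono: "semistar R st \<Longrightarrow> E \<in> Fbar R \<Longrightarrow> F \<in> Fbar R \<Longrightarrow> E \<subseteq> F \<Longrightarrow> st E \<subseteq> st F"
  by (simp add: semistar_def)
lemma ss_ext: "semistar R st \<Longrightarrow> E \<in> Fbar R \<Longrightarrow> E \<subseteq> st E" by (simp add: semistar_def)
lemma ss_idem: "semistar R st \<Longrightarrow> E \<in> Fbar R \<Longrightarrow> st (st E) = st E" by (simp add: semistar_def)
lemma ss_submod: "semistar R st \<Longrightarrow> E \<in> Fbar R \<Longrightarrow> submod R (st E)"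
  using ss_Fbar[of R st E] by (simp add: Fbar_def)

lemma ss_one:
  assumes "subring R" "semistar R st" "G \<in> Fbar R" "G \<subseteq> R" "1 \<in> st G"
  shows "st G = st R"
proof
  show "st G \<subseteq> st R" using assms by (intro ss_mono[OF assms(2)] subring_Fbar) auto
  have "R \<subseteq> st G"
  proof
    fix r assume "r \<in> R"
    then have "r * 1 \<in> st G" using assms(5) ss_submod[OF assms(2,3)] by (intro submod_mult)
    then show "r \<in> st G" by simp
  qed
  then have "st R \<subseteq> st (st G)" using assms by (intro ss_mono[OF assms(2)] ss_Fbar[OF assms(2)] subring_Fbar) auto
  then show "st R \<subseteq> st G" using ss_idem[OF assms(2,3)] by simp
qed

lemma starf_memE: "z \<in> star_f R st E \<Longrightarrow> (\<And>F. F \<in> fgF R \<Longrightarrow> F \<subseteq> E \<Longrightarrow> z \<in> st F \<Longrightarrow> P) \<Longrightarrow> P"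
  unfolding star_f_def by blast
lemma starf_memI: "F \<in> fgF R \<Longrightarrow> F \<subseteq> E \<Longrightarrow> z \<in> st F \<Longrightarrow> z \<in> star_f R st E"
  unfolding star_f_def by blast
lemma starf_subI: "F \<in> fgF R \<Longrightarrow> F \<subseteq> E \<Longrightarrow> st F \<subseteq> star_f R st E"
  unfolding star_f_def by blast
lemma starf_mono: "E \<subseteq> E' \<Longrightarrow> star_f R st E \<subseteq> star_f R st E'"
  unfolding star_f_def by blast

lemma starf_sub_st:
  assumes "subring R" "semistar R st" "E \<subseteq> R" shows "star_f R st E \<subseteq> st R"
proof
  fix z assume "z \<in> star_f R st E"
  then obtain F where F: "F \<in> fgF R" "F \<subseteq> E" "z \<in> st F" by (rule starf_memE)
  have "st F \<subseteq> st R" using assms F by (intro ss_mono[OF assms(2)] subring_Fbar fgF_Fbar) auto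
  then show "z \<in> st R" using F by auto
qed

lemma fg_union:
  assumes R: "subring R" and E: "submod R E" and A: "finite A" "A \<noteq> {}"
    and FA: "\<And>a. a \<in> A \<Longrightarrow> F a \<in> fgF R \<and> F a \<subseteq> E"
  shows "\<exists>G\<in>fgF R. G \<subseteq> E \<and> (\<forall>a\<in>A. F a \<subseteq> G)"
proof -
  have "\<forall>a\<in>A. \<exists>S. finite S \<and> F a = span R S \<and> F a \<noteq> {0}"
  proof
    fix a assume "a \<in> A"
    then have "F a \<in> fgF R" using FA by blast
    from fgF_D[OF this] show "\<exists>S. finite S \<and> F a = span R S \<and> F a \<noteq> {0}" by blast
  qed
  then have "\<exists>S. \<forall>a\<in>A. finite (S a) \<and> F a = span R (S a) \<and> F a \<noteq> {0}" by (rule bchoice)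
  then obtain S where S0: "\<forall>a\<in>A. finite (S a) \<and> F a = span R (S a) \<and> F a \<noteq> {0}" by (erule exE)
  have S: "finite (S a) \<and> F a = span R (S a) \<and> F a \<noteq> {0}" if "a \<in> A" for a by (rule bspec[OF S0 that])
  define U where "U = (\<Union>a\<in>A. S a)"
  have fin: "finite U" using S A(1) by (simp add: U_def)
  obtain a0 where a0: "a0 \<in> A" using A(2) by blast
  obtain s where s: "s \<in> S a0" "s \<noteq> 0" using span_zero[OF R, of "S a0"] S[OF a0] by blast
  have sU: "s \<in> U" using s a0 by (auto simp: U_def)
  have G: "span R U \<in> fgF R" using fgF_span[OF fin R sU s(2)] .
  have "S a \<subseteq> E" if "a \<in> A" for a
  proof
    fix x assume "x \<in> S a"
    then have "x \<in> span R (S a)" using span_mem[OF _ _ R] S[OF that] by blast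
    then show "x \<in> E" using S[OF that] FA[OF that] by blast
  qed
  then have "U \<subseteq> E" by (auto simp: U_def)
  then have "span R U \<subseteq> E" using span_sub[OF E] by blast
  moreover have "F a \<subseteq> span R U" if "a \<in> A" for a
  proof -
    have "S a \<subseteq> U" using that by (auto simp: U_def)
    then show ?thesis using S[OF that] span_mono[OF _ fin R] by simp
  qed
  ultimately show ?thesis using G by blast
qed

lemma starf_nonempty_fg:
  assumes "subring R" "submod R E" "e \<in> E" "e \<noteq> 0"
  shows "span R {e} \<in> fgF R \<and> span R {e} \<subseteq> E"
  using assms fgF_span[of "{e}" R e] span_sub[OF assms(2), of "{e}"] by auto

lemma starf_ext:
  assumes "subring R" "semistar R st" "submod R E" "E \<noteq> {0}"
  shows "E \<subseteq> star_f R st E"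
proof
  fix z assume z: "z \<in> E"
  obtain e where e: "e \<in> E" "e \<noteq> 0" using assms(3,4) submod_0 by blast
  show "z \<in> star_f R st E"
  proof (cases "z = 0")
    case True
    have "0 \<in> st (span R {e})" using ss_submod[OF assms(2) fgF_Fbar] starf_nonempty_fg[OF assms(1,3) e] submod_0 by blast
    then show ?thesis using True starf_nonempty_fg[OF assms(1,3) e] by (blast intro: starf_memI)
  next
    case False
    have "z \<in> span R {z}" using span_mem[OF _ _ assms(1), of "{z}" z] by simp
    then have "z \<in> st (span R {z})" using ss_ext[OF assms(2) fgF_Fbar] starf_nonempty_fg[OF assms(1,3) z False] by blast
    then show ?thesis using starf_nonempty_fg[OF assms(1,3) z False] by (blast intro: starf_memI)
  qed
qed

lemma starf_submod:
  assumes "subring R" "semistar R st" "submod R E" "E \<noteq> {0}"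
  shows "submod R (star_f R st E)"
proof -
  have "0 \<in> star_f R st E" using starf_ext[OF assms] submod_0[OF assms(3)] by blast
  moreover have "x + y \<in> star_f R st E" if xy: "x \<in> star_f R st E" "y \<in> star_f R st E" for x y
  proof -
    obtain F1 where F1: "F1 \<in> fgF R" "F1 \<subseteq> E" "x \<in> st F1" using xy(1) by (rule starf_memE)
    obtain F2 where F2: "F2 \<in> fgF R" "F2 \<subseteq> E" "y \<in> st F2" using xy(2) by (rule starf_memE)
    have "\<exists>G\<in>fgF R. G \<subseteq> E \<and> (\<forall>a\<in>{True, False}. (if a then F1 else F2) \<subseteq> G)"
      by (rule fg_union[OF assms(1,3)]) (use F1 F2 in auto)
    then obtain G where G: "G \<in> fgF R" "G \<subseteq> E" "F1 \<subseteq> G" "F2 \<subseteq> G" by auto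
    have "st F1 \<subseteq> st G" "st F2 \<subseteq> st G"
      using ss_mono[OF assms(2) fgF_Fbar[OF F1(1)] fgF_Fbar[OF G(1)] G(3)]
        ss_mono[OF assms(2) fgF_Fbar[OF F2(1)] fgF_Fbar[OF G(1)] G(4)] by auto
    then have "x + y \<in> st G" using F1 F2 ss_submod[OF assms(2) fgF_Fbar[OF G(1)]] submod_add by blast
    then show ?thesis using G by (blast intro: starf_memI)
  qed
  moreover have "t * x \<in> star_f R st E" if tx: "t \<in> R" "x \<in> star_f R st E" for t x
  proof -
    obtain F1 where F1: "F1 \<in> fgF R" "F1 \<subseteq> E" "x \<in> st F1" using tx(2) by (rule starf_memE)
    then have "t * x \<in> st F1" using ss_submod[OF assms(2) fgF_Fbar[OF F1(1)]] submod_mult tx by blast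
    then show ?thesis using F1 by (blast intro: starf_memI)
  qed
  ultimately show ?thesis unfolding submod_def by blast
qed

lemma starf_idem:
  assumes R: "subring R" and st: "semistar R st" and E: "submod R E"
  shows "star_f R st (star_f R st E) \<subseteq> star_f R st E"
proof
  fix z assume "z \<in> star_f R st (star_f R st E)"
  then obtain G where G: "G \<in> fgF R" "G \<subseteq> star_f R st E" "z \<in> st G" by (rule starf_memE)
  obtain S where S: "finite S" "G = span R S" "G \<noteq> {0}" using fgF_D[OF G(1)] by blast
  obtain s0 where s0: "s0 \<in> S" "s0 \<noteq> 0" using span_zero[OF R] S by blast
  have SG: "S \<subseteq> G" using S span_mem[OF _ _ R] by blast
  have "\<forall>s\<in>S. \<exists>F. F \<in> fgF R \<and> F \<subseteq> E \<and> s \<in> st F"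
  proof
    fix s assume "s \<in> S"
    then have "s \<in> star_f R st E" using SG G(2) by blast
    then show "\<exists>F. F \<in> fgF R \<and> F \<subseteq> E \<and> s \<in> st F" by (rule starf_memE) blast
  qed
  then have "\<exists>F. \<forall>s\<in>S. F s \<in> fgF R \<and> F s \<subseteq> E \<and> s \<in> st (F s)" by (rule bchoice)
  then obtain F where F0: "\<forall>s\<in>S. F s \<in> fgF R \<and> F s \<subseteq> E \<and> s \<in> st (F s)" by (erule exE)
  have "S \<noteq> {}" using s0 by blast
  then have "\<exists>H\<in>fgF R. H \<subseteq> E \<and> (\<forall>s\<in>S. F s \<subseteq> H)"
    by (intro fg_union[OF R E S(1)]) (use F0 in blast)+
  then obtain H where H: "H \<in> fgF R" "H \<subseteq> E" "\<forall>s\<in>S. F s \<subseteq> H" by blast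
  have HF: "H \<in> Fbar R" using fgF_Fbar[OF H(1)] .
  have "S \<subseteq> st H"
  proof
    fix s assume s: "s \<in> S"
    then have "st (F s) \<subseteq> st H" using F0 H(3) HF by (intro ss_mono[OF st]) (auto intro: fgF_Fbar)
    then show "s \<in> st H" using F0 s by blast
  qed
  then have "G \<subseteq> st H" using S(2) span_sub ss_submod[OF st HF] by blast
  then have "st G \<subseteq> st (st H)" using ss_mono[OF st fgF_Fbar[OF G(1)] ss_Fbar[OF st HF]] by blast
  then have "z \<in> st H" using ss_idem[OF st HF] G(3) by auto
  then show "z \<in> star_f R st E" using H by (blast intro: starf_memI)
qed

lemma quasi_zorn:
  assumes R: "subring R" and st: "semistar R st" and I: "ideal_of R I" "I \<noteq> {0}" "1 \<notin> star_f R st I"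
  shows "\<exists>Q. quasi_max R (star_f R st) Q \<and> I \<subseteq> Q"
proof -
  define A where "A = {J. ideal_of R J \<and> I \<subseteq> J \<and> 1 \<notin> star_f R st J}"
  have "A \<noteq> {}" using I by (auto simp: A_def)
  moreover have "\<Union>C \<in> A" if C: "C \<noteq> {}" "subset.chain A C" for C
  proof -
    have CA: "C \<subseteq> A" using C by (simp add: subset.chain_def)
    have sub: "submod R (\<Union>C)"
      unfolding submod_def
    proof (intro conjI ballI)
      show "0 \<in> \<Union>C" using C CA by (auto simp: A_def ideal_of_def submod_def)
    next
      fix x y assume "x \<in> \<Union>C" "y \<in> \<Union>C"
      then obtain J1 J2 where "J1 \<in> C" "J2 \<in> C" "x \<in> J1" "y \<in> J2" by blast
      moreover then have "J1 \<subseteq> J2 \<or> J2 \<subseteq> J1" using C by (auto simp: subset.chain_def)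
      moreover have "\<forall>J\<in>C. submod R J" using CA by (auto simp: A_def ideal_of_def)
      ultimately have "x + y \<in> J1 \<or> x + y \<in> J2" by (metis submod_add subsetD)
      then show "x + y \<in> \<Union>C" using \<open>J1 \<in> C\<close> \<open>J2 \<in> C\<close> by blast
    next
      fix t x assume tx: "t \<in> R" "x \<in> \<Union>C"
      then obtain J1 where "J1 \<in> C" "x \<in> J1" by blast
      moreover have "\<forall>J\<in>C. submod R J" using CA by (auto simp: A_def ideal_of_def)
      ultimately have "t * x \<in> J1" using tx submod_mult by blast
      then show "t * x \<in> \<Union>C" using \<open>J1 \<in> C\<close> by blast
    qed
    have "\<Union>C \<subseteq> R" using CA by (auto simp: A_def ideal_of_def)
    moreover have "I \<subseteq> \<Union>C" using C CA by (auto simp: A_def)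
    moreover have "1 \<notin> star_f R st (\<Union>C)"
    proof
      assume "1 \<in> star_f R st (\<Union>C)"
      then obtain G where G: "G \<in> fgF R" "G \<subseteq> \<Union>C" "1 \<in> st G" by (rule starf_memE)
      obtain S where S: "finite S" "G = span R S" using fgF_D[OF G(1)] by blast
      have "S \<subseteq> \<Union>C" using S G span_mem R by blast
      then obtain J where J: "J \<in> C" "S \<subseteq> J" using finite_subset_Union_chain[OF S(1) _ C(1,2)] by blast
      have "G \<subseteq> J" using J CA S span_sub[of R J S] by (auto simp: A_def ideal_of_def)
      then have "1 \<in> star_f R st J" using G by (blast intro: starf_memI)
      then show False using J CA by (auto simp: A_def)
    qed
    ultimately show ?thesis using sub by (auto simp: A_def ideal_of_def)
  qed
  ultimately obtain M where M: "M \<in> A" "\<And>X. X \<in> A \<Longrightarrow> M \<subseteq> X \<Longrightarrow> X = M"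
    using subset_Zorn_nonempty[of A] by blast
  have Mi: "ideal_of R M" "I \<subseteq> M" "1 \<notin> star_f R st M" using M(1) by (auto simp: A_def)
  have Mnz: "M \<noteq> {0}" using Mi I by (auto simp: ideal_of_def submod_def)
  define Q where "Q = star_f R st M \<inter> R"
  have sfsub: "submod R (star_f R st M)" using starf_submod[OF R st _ Mnz] Mi by (auto simp: ideal_of_def)
  have MQ: "M \<subseteq> Q" using starf_ext[OF R st _ Mnz] Mi by (auto simp: Q_def ideal_of_def)
  have Qi: "ideal_of R Q" using sfsub subring_submod[OF R]
    by (auto simp: Q_def ideal_of_def submod_def)
  have "star_f R st Q \<subseteq> star_f R st M"
    using starf_mono[of Q "star_f R st M" R st] starf_idem[OF R st] Mi by (auto simp: Q_def ideal_of_def)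
  then have "1 \<notin> star_f R st Q" using Mi by auto
  then have "Q \<in> A" using Qi MQ Mi by (auto simp: A_def)
  then have QM: "Q = M" using M(2) MQ by blast
  have qi: "quasi_ideal R (star_f R st) M" using QM Mi Mnz by (auto simp: quasi_ideal_def Q_def)
  have "1 \<notin> M" using Mi MQ QM Q_def by auto
  then have ne: "M \<noteq> R" using subring_1[OF R] by auto
  have "J = M" if J: "quasi_ideal R (star_f R st) J" "J \<noteq> R" "M \<subseteq> J" for J
  proof -
    have "1 \<notin> star_f R st J"
    proof
      assume "1 \<in> star_f R st J"
      then have "1 \<in> J" using J(1) subring_1[OF R] by (auto simp: quasi_ideal_def)
      then show False using ideal_one J by (auto simp: quasi_ideal_def)
    qed
    then have "J \<in> A" using J Mi by (auto simp: A_def quasi_ideal_def)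
    then show ?thesis using M(2) J by blast
  qed
  then have "quasi_max R (star_f R st) M" using qi ne by (auto simp: quasi_max_def)
  then show ?thesis using Mi by blast
qed

lemma quasi_max_prime:
  assumes R: "subring R" and st: "semistar R st" and Q: "quasi_max R (star_f R st) Q"
  shows "prime_of R Q"
proof -
  have Qi: "ideal_of R Q" "Q \<noteq> R" "Q \<noteq> {0}" "star_f R st Q \<inter> R = Q"
    using Q by (auto simp: quasi_max_def quasi_ideal_def)
  have "y \<in> Q" if xy: "x \<in> R" "y \<in> R" "x * y \<in> Q" "x \<notin> Q" for x y
  proof (rule ccontr)
    assume yQ: "y \<notin> Q"
    then have y0: "y \<noteq> 0" using Qi by (auto simp: ideal_of_def submod_def)
    define J where "J = {q + x * r | q r. q \<in> Q \<and> r \<in> R}"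
    have QJ: "Q \<subseteq> J" unfolding J_def using subring_0[OF R] by force
    have xJ: "x \<in> J" unfolding J_def using subring_1[OF R] Qi by (force simp: ideal_of_def submod_def)
    have Jsub: "J \<subseteq> R" using Qi xy R by (auto simp: J_def ideal_of_def subring_add subring_mult)
    have JI: "q + x * r \<in> J" if "q \<in> Q" "r \<in> R" for q r unfolding J_def using that by blast
    have Qs: "submod R Q" using Qi by (simp add: ideal_of_def)
    have Jsm: "submod R J" unfolding submod_def
    proof (intro conjI ballI)
      show "0 \<in> J" using QJ Qi by (auto simp: ideal_of_def submod_def)
    next
      fix a b assume "a \<in> J" "b \<in> J"
      then obtain q1 r1 q2 r2 where "a = q1 + x * r1" "b = q2 + x * r2" "q1 \<in> Q" "q2 \<in> Q" "r1 \<in> R" "r2 \<in> R"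
        by (auto simp: J_def)
      moreover then have "a + b = (q1 + q2) + x * (r1 + r2)" by (simp add: algebra_simps)
      ultimately show "a + b \<in> J" using JI submod_add[OF Qs] subring_add[OF R] by metis
    next
      fix t a assume "t \<in> R" "a \<in> J"
      then obtain q1 r1 where "a = q1 + x * r1" "q1 \<in> Q" "r1 \<in> R" "t \<in> R" by (auto simp: J_def)
      moreover then have "t * a = t * q1 + x * (t * r1)" by (simp add: algebra_simps)
      ultimately show "t * a \<in> J" using JI submod_mult[OF Qs] subring_mult[OF R] by metis
    qed
    have Jnz: "J \<noteq> {0}" using QJ Qi(3) Qs submod_0 by blast
    show False
    proof (cases "1 \<in> star_f R st J")
      case False
      then obtain Q' where Q': "quasi_max R (star_f R st) Q'" "J \<subseteq> Q'"
        using quasi_zorn[OF R st _ Jnz] Jsm Jsub by (auto simp: ideal_of_def)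
      then have "Q' = Q" using Q QJ by (auto simp: quasi_max_def)
      then show False using Q' xJ xy by auto
    next
      case True
      then obtain G where G: "G \<in> fgF R" "G \<subseteq> J" "1 \<in> st G" by (rule starf_memE)
      obtain S where S: "finite S" "G = span R S" "G \<noteq> {0}" using fgF_D[OF G(1)] by blast
      obtain s0 where s0: "s0 \<in> S" "s0 \<noteq> 0" using span_zero[OF R] S by blast
      have yG: "(*) y ` G = span R ((*) y ` S)" using span_scale[OF y0] S by simp
      have yGfg: "(*) y ` G \<in> fgF R" using yG fgF_span[OF _ R, of "(*) y ` S" "y * s0"] S s0 y0 by auto
      have "(*) y ` G \<subseteq> Q"
      proof
        fix z assume "z \<in> (*) y ` G"
        then obtain g where g: "z = y * g" "g \<in> J" using G by blast
        then obtain q r where "g = q + x * r" "q \<in> Q" "r \<in> R" by (auto simp: J_def)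
        moreover then have "z = y * q + r * (x * y)" using g by (simp add: algebra_simps)
        ultimately show "z \<in> Q" using Qi xy by (auto simp: ideal_of_def submod_def)
      qed
      moreover have "y \<in> st ((*) y ` G)" using ss_mult[OF st y0 fgF_Fbar[OF G(1)]] G by force
      ultimately have "y \<in> star_f R st Q" using yGfg by (blast intro: starf_memI)
      then show False using Qi xy yQ by auto
    qed
  qed
  then show ?thesis using Qi by (auto simp: prime_of_def)
qed

definition mclosed :: "'K::field set \<Rightarrow> 'K set \<Rightarrow> bool" where
  "mclosed T S \<longleftrightarrow> S \<subseteq> T \<and> 1 \<in> S \<and> 0 \<notin> S \<and> (\<forall>a\<in>S. \<forall>b\<in>S. a * b \<in> S)"

lemma fracsI: "t \<in> T \<Longrightarrow> s \<in> S \<Longrightarrow> z = t / s \<Longrightarrow> z \<in> fracs T S"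
  unfolding fracs_def by blast
lemma fracsE: "z \<in> fracs T S \<Longrightarrow> (\<And>t s. t \<in> T \<Longrightarrow> s \<in> S \<Longrightarrow> z = t / s \<Longrightarrow> P) \<Longrightarrow> P"
  unfolding fracs_def by blast

lemma fracs_subring:
  assumes T: "subring T" and S: "mclosed T S"
  shows "subring (fracs T S)"
proof -
  have S1: "S \<subseteq> T" "1 \<in> S" "0 \<notin> S" "\<And>a b. a \<in> S \<Longrightarrow> b \<in> S \<Longrightarrow> a * b \<in> S"
    using S by (auto simp: mclosed_def)
  have "0 \<in> fracs T S" using S1 subring_0[OF T] by (intro fracsI[of 0 T 1]) auto
  moreover have "1 \<in> fracs T S" using S1 subring_1[OF T] by (intro fracsI[of 1 T 1]) auto
  moreover have "x + y \<in> fracs T S \<and> x - y \<in> fracs T S \<and> x * y \<in> fracs T S"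
    if xy: "x \<in> fracs T S" "y \<in> fracs T S" for x y
  proof -
    obtain a s where as: "a \<in> T" "s \<in> S" "x = a / s" using xy(1) by (rule fracsE)
    obtain b t where bt: "b \<in> T" "t \<in> S" "y = b / t" using xy(2) by (rule fracsE)
    have s0: "s \<noteq> 0" "t \<noteq> 0" using as bt S1 by auto
    have st: "s * t \<in> S" using S1 as bt by auto
    have sT: "s \<in> T" "t \<in> T" using S1 as bt by auto
    have "x + y = (a * t + b * s) / (s * t)" using s0 by (simp add: as bt field_simps)
    moreover have "x - y = (a * t - b * s) / (s * t)" using s0 by (simp add: as bt field_simps)
    moreover have "x * y = (a * b) / (s * t)" using s0 by (simp add: as bt field_simps)
    moreover have "a * t + b * s \<in> T" "a * t - b * s \<in> T" "a * b \<in> T"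
      using as bt sT T by (auto intro: subring_add subring_diff subring_mult)
    ultimately show ?thesis using st by (auto intro: fracsI)
  qed
  ultimately show ?thesis unfolding subring_def by blast
qed

lemma fracs_base: "1 \<in> S \<Longrightarrow> T \<subseteq> fracs T S"
  by (auto intro: fracsI[where s=1])

lemma fracs_mono: "T \<subseteq> T' \<Longrightarrow> S \<subseteq> S' \<Longrightarrow> fracs T S \<subseteq> fracs T' S'"
  unfolding fracs_def by blast

lemma fracs_inv: "1 \<in> T \<Longrightarrow> s \<in> S \<Longrightarrow> inverse s \<in> fracs T S"
  by (rule fracsI[of 1 T s]) (auto simp: field_simps)

lemma prime_mclosed_D:
  assumes "prime_of D P" "subring D"
  shows "mclosed D (D - P)"
proof -
  have "1 \<notin> P" using assms ideal_one by (auto simp: prime_of_def)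
  moreover have "0 \<in> P" using assms by (auto simp: prime_of_def ideal_of_def submod_def)
  moreover have "a * b \<in> D - P" if "a \<in> D - P" "b \<in> D - P" for a b
    using that assms subring_mult[OF assms(2)] by (auto simp: prime_of_def)
  ultimately show ?thesis using subring_1[OF assms(2)] by (auto simp: mclosed_def)
qed

lemma mclosed_over: "mclosed D S \<Longrightarrow> D \<subseteq> T \<Longrightarrow> mclosed T S"
  by (auto simp: mclosed_def)

section \<open>Integrality and valuation rings\<close>

definition integral_over :: "'K::field set \<Rightarrow> 'K \<Rightarrow> bool" where
  "integral_over R x \<longleftrightarrow> (\<exists>p. lead_coeff p = 1 \<and> (\<forall>i. coeff p i \<in> R) \<and> poly p x = 0)"

lemma ic_def2: "integrally_closed R \<longleftrightarrow> (\<forall>x. integral_over R x \<longrightarrow> x \<in> R)"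
  by (simp add: integrally_closed_def integral_over_def)

lemma integral_mono: "integral_over R x \<Longrightarrow> R \<subseteq> R' \<Longrightarrow> integral_over R' x"
  unfolding integral_over_def by blast

definition valring :: "'K::field set \<Rightarrow> bool" where
  "valring W \<longleftrightarrow> subring W \<and> (\<forall>u. u \<noteq> 0 \<longrightarrow> u \<in> W \<or> inverse u \<in> W)"

lemma valring_mono: "valring W \<Longrightarrow> W \<subseteq> W' \<Longrightarrow> subring W' \<Longrightarrow> valring W'"
  unfolding valring_def by blast

lemma poly_split:
  "poly p (x::'a::field) = (\<Sum>i<degree p. coeff p i * x ^ i) + lead_coeff p * x ^ degree p"
proof -
  have "{..degree p} = insert (degree p) {..<degree p}" by auto
  then show ?thesis by (simp add: poly_altdef add.commute)
qed

lemma monic_coeff: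
  "coeff (monom (1::'a::field) n + (\<Sum>i<n. monom (b i) i)) k = (if k = n then 1 else if k < n then b k else 0)"
  by (auto simp: coeff_sum sum.delta)

lemma monic_lead:
  "lead_coeff (monom (1::'a::field) n + (\<Sum>i<n. monom (b i) i)) = 1"
proof -
  let ?p = "monom (1::'a) n + (\<Sum>i<n. monom (b i) i)"
  have "degree ?p \<le> n" by (rule degree_le) (simp only: monic_coeff, simp)
  moreover have "n \<le> degree ?p" by (rule le_degree) (simp only: monic_coeff, simp)
  ultimately have "degree ?p = n" by simp
  then show ?thesis by (simp only: monic_coeff, simp)
qed

lemma monic_poly:
  "poly (monom 1 n + (\<Sum>i<n. monom (b i) i)) (x::'a::field) = x ^ n + (\<Sum>i<n. b i * x ^ i)"
  by (simp add: poly_sum poly_monom)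

lemma integral_overI:
  assumes "\<And>i. i < n \<Longrightarrow> b i \<in> R" "0 \<in> R" "1 \<in> R" "x ^ n + (\<Sum>i<n. b i * x ^ i) = 0"
  shows "integral_over R x"
  unfolding integral_over_def
proof (intro exI conjI allI)
  let ?p = "monom 1 n + (\<Sum>i<n. monom (b i) i)"
  show "lead_coeff ?p = 1" by (rule monic_lead)
  show "poly ?p x = 0" by (simp only: monic_poly assms(4))
  fix i show "coeff ?p i \<in> R" by (simp only: monic_coeff) (use assms in auto)
qed

lemma integral_overE:
  assumes "integral_over R x"
  obtains n b where "\<And>i. b i \<in> R" "x ^ n + (\<Sum>i<n. b i * x ^ i) = 0"
proof -
  obtain p where p: "lead_coeff p = 1" "\<forall>i. coeff p i \<in> R" "poly p x = 0"
    using assms unfolding integral_over_def by blast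
  show ?thesis using that[of "coeff p" "degree p"] p poly_split[of p x] by (simp add: add.commute)
qed

lemma valring_ic:
  assumes W: "valring W" and x: "integral_over W x" shows "x \<in> W"
proof (rule ccontr)
  assume xW: "x \<notin> W"
  have Ws: "subring W" using W by (simp add: valring_def)
  obtain n b where b: "\<And>i. b i \<in> W" and eq: "x ^ n + (\<Sum>i<n. b i * x ^ i) = 0"
    using integral_overE[OF x] by blast
  have x0: "x \<noteq> 0" using xW subring_0[OF Ws] by auto
  have y: "inverse x \<in> W" using W xW x0 by (auto simp: valring_def)
  define y where "y = inverse x"
  have n0: "n \<noteq> 0" using eq by (cases n) auto
  have xy: "x * y = 1" using x0 by (simp add: y_def)
  have pw: "x ^ i * y ^ (n - 1) = y ^ (n - 1 - i)" if "i < n" for i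
  proof -
    have "y ^ (n - 1) = y ^ i * y ^ (n - 1 - i)" using that by (simp add: power_add[symmetric])
    then have "x ^ i * y ^ (n - 1) = (x * y) ^ i * y ^ (n - 1 - i)" by (simp add: power_mult_distrib)
    then show ?thesis using xy by simp
  qed
  have "x ^ n * y ^ (n - 1) = x"
  proof -
    have "x ^ n = x * x ^ (n - 1)" using n0 by (simp add: power_eq_if)
    then have "x ^ n * y ^ (n - 1) = x * (x * y) ^ (n - 1)" by (simp add: power_mult_distrib)
    then show ?thesis using xy by simp
  qed
  moreover have "(\<Sum>i<n. b i * x ^ i) * y ^ (n - 1) = (\<Sum>i<n. b i * y ^ (n - 1 - i))"
    unfolding sum_distrib_right
  proof (rule sum.cong[OF refl])
    fix i assume "i \<in> {..<n}"
    then have "x ^ i * y ^ (n - 1) = y ^ (n - 1 - i)" using pw by simp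
    then show "b i * x ^ i * y ^ (n - 1) = b i * y ^ (n - 1 - i)" by (simp only: mult.assoc)
  qed
  moreover have "(x ^ n + (\<Sum>i<n. b i * x ^ i)) * y ^ (n - 1) = 0" using eq by simp
  ultimately have "x = - (\<Sum>i<n. b i * y ^ (n - 1 - i))" by (simp add: distrib_right eq_neg_iff_add_eq_0)
  moreover have "(\<Sum>i<n. b i * y ^ (n - 1 - i)) \<in> W"
    by (intro subring_sum[OF Ws] subring_mult[OF Ws] subring_power[OF Ws] b) (simp add: y_def y)
  ultimately show False using xW subring_uminus[OF Ws] by auto
qed

lemma ic_seminormal:
  assumes "integrally_closed R" "\<And>x. x \<in> R \<Longrightarrow> - x \<in> R" "0 \<in> R" "1 \<in> R"
  shows "seminormal R"
  unfolding seminormal_def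
proof (intro allI impI)
  fix x :: 'a assume x: "x ^ 2 \<in> R \<and> x ^ 3 \<in> R"
  have m: "- (x ^ 2) \<in> R" using assms(2) x by blast
  have "integral_over R x"
  proof (rule integral_overI[of 2 "\<lambda>i. if i = 0 then - (x ^ 2) else 0"])
    fix i :: nat assume "i < 2" then show "(if i = 0 then - (x ^ 2) else 0) \<in> R" using m assms(3) by simp
  next
    show "x ^ 2 + (\<Sum>i<2. (if i = 0 then - (x ^ 2) else 0) * x ^ i) = 0" by (simp add: numeral_2_eq_2)
  qed (use assms in auto)
  then show "x \<in> R" using assms(1) by (simp add: ic_def2)
qed

section \<open>Local rings, Kaplansky's lemma\<close>

definition unit_in :: "'K::field set \<Rightarrow> 'K \<Rightarrow> bool" where
  "unit_in V a \<longleftrightarrow> a \<noteq> 0 \<and> inverse a \<in> V"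

definition localr :: "'K::field set \<Rightarrow> bool" where
  "localr V \<longleftrightarrow> (\<forall>a\<in>V. \<forall>b\<in>V. \<not> unit_in V a \<longrightarrow> \<not> unit_in V b \<longrightarrow> \<not> unit_in V (a + b))"

lemma kap:
  assumes V: "subring V" "localr V" "integrally_closed V"
  shows "(\<forall>i. coeff q i \<in> V) \<Longrightarrow> poly q u = 0 \<Longrightarrow> unit_in V (coeff q j) \<Longrightarrow> u \<in> V \<or> inverse u \<in> V"
proof (induction "degree q" arbitrary: q j rule: less_induct)
  case less
  define n where "n = degree q"
  define c where "c = coeff q n"
  have cV: "c \<in> V" using less by (simp add: c_def)
  have qs: "poly q u = (\<Sum>i<n. coeff q i * u ^ i) + c * u ^ n"
    using poly_split[of q u] by (simp add: n_def c_def)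
  show ?case
  proof (cases "unit_in V c")
    case True
    have ic: "inverse c \<in> V" "c \<noteq> 0" using True by (auto simp: unit_in_def)
    have "integral_over V u"
    proof (rule integral_overI[of n "\<lambda>i. coeff q i * inverse c"])
      show "coeff q i * inverse c \<in> V" if "i < n" for i using less ic V by (auto intro: subring_mult)
      show "0 \<in> V" "1 \<in> V" using V by (auto simp: subring_0 subring_1)
      have "u ^ n + (\<Sum>i<n. coeff q i * inverse c * u ^ i) = inverse c * poly q u"
        using ic by (simp add: qs sum_distrib_left algebra_simps)
      then show "u ^ n + (\<Sum>i<n. coeff q i * inverse c * u ^ i) = 0" using less by simp
    qed
    then show ?thesis using V(3) by (simp add: ic_def2)
  next
    case False
    have jn: "j < n"
    proof (rule ccontr)
      assume "\<not> j < n"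
      then have "j = n \<or> j > n" by auto
      then show False using False less(4) coeff_eq_0[of q j] by (auto simp: n_def c_def unit_in_def)
    qed
    then have n0: "n > 0" by simp
    show ?thesis
    proof (cases "u = 0")
      case True then show ?thesis using V by (simp add: subring_0)
    next
      case u0: False
      define v where "v = c * u"
      have "integral_over V v"
      proof (rule integral_overI[of n "\<lambda>i. coeff q i * c ^ (n - 1 - i)"])
        show "coeff q i * c ^ (n - 1 - i) \<in> V" if "i < n" for i
          using less cV V by (auto intro: subring_mult subring_power)
        show "0 \<in> V" "1 \<in> V" using V by (auto simp: subring_0 subring_1)
        have e1: "v ^ n = c ^ (n - 1) * (c * u ^ n)"
        proof -
          have "c ^ n = c ^ (n - 1) * c" using n0 by (simp add: power_eq_if)
          then show ?thesis by (simp add: v_def power_mult_distrib)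
        qed
        have e2: "coeff q i * c ^ (n - 1 - i) * v ^ i = c ^ (n - 1) * (coeff q i * u ^ i)" if "i < n" for i
        proof -
          have "c ^ (n - 1) = c ^ (n - 1 - i) * c ^ i" using that by (simp add: power_add[symmetric])
          then show ?thesis by (simp add: v_def power_mult_distrib)
        qed
        have "(\<Sum>i<n. coeff q i * c ^ (n - 1 - i) * v ^ i) = (\<Sum>i<n. c ^ (n - 1) * (coeff q i * u ^ i))"
          by (rule sum.cong[OF refl]) (use e2 in auto)
        then have "v ^ n + (\<Sum>i<n. coeff q i * c ^ (n - 1 - i) * v ^ i) = c ^ (n - 1) * poly q u"
          using e1 by (simp only: qs sum_distrib_left[symmetric] distrib_left add.commute)
        then show "v ^ n + (\<Sum>i<n. coeff q i * c ^ (n - 1 - i) * v ^ i) = 0" using less by simp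
      qed
      then have vV: "v \<in> V" using V(3) by (simp add: ic_def2)
      show ?thesis
      proof (cases "unit_in V v")
        case True
        then have "v \<noteq> 0" "inverse v \<in> V" by (auto simp: unit_in_def)
        then have c0: "c \<noteq> 0" by (auto simp: v_def)
        have "inverse u = c * inverse v" using c0 u0 by (simp add: v_def field_simps)
        then show ?thesis using cV \<open>inverse v \<in> V\<close> V by (simp add: subring_mult)
      next
        case vnu: False
        define q' where "q' = q - monom c n + monom v (n - 1)"
        have cq': "coeff q' k = coeff q k - (if n = k then c else 0) + (if n - 1 = k then v else 0)" for k
          by (simp add: q'_def)
        have q'V: "\<forall>i. coeff q' i \<in> V"
        proof
          fix k
          have "coeff q k - (if n = k then c else 0) + (if n - 1 = k then v else 0) \<in> V"
            by (intro subring_add[OF V(1)] subring_diff[OF V(1)]) (use less cV vV subring_0[OF V(1)] in auto)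
          then show "coeff q' k \<in> V" by (simp only: cq')
        qed
        have "v * u ^ (n - 1) = c * u ^ n"
        proof -
          have "u ^ n = u * u ^ (n - 1)" using n0 by (simp add: power_eq_if)
          then show ?thesis by (simp add: v_def)
        qed
        then have pq': "poly q' u = 0" using less by (simp add: q'_def poly_monom)
        have "degree q' \<le> n - 1"
        proof (rule degree_le, intro allI impI)
          fix k assume "n - 1 < k"
          then have "k \<ge> n" by simp
          show "coeff q' k = 0"
          proof (cases "k = n")
            case True then show ?thesis using n0 by (simp add: cq' c_def)
          next
            case False then have "k > n" using \<open>k \<ge> n\<close> by simp
            then show ?thesis using n0 coeff_eq_0[of q k] by (simp add: cq' n_def)
          qed
        qed
        then have dq': "degree q' < degree q" using n0 by (simp add: n_def)
        have "unit_in V (coeff q' j)"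
        proof (cases "j = n - 1")
          case False then show ?thesis using jn less(4) by (simp add: cq')
        next
          case True
          have cj: "coeff q' j = coeff q j + v" using True jn by (simp add: cq')
          show ?thesis
          proof (rule ccontr)
            assume nu: "\<not> unit_in V (coeff q' j)"
            have mv: "\<not> unit_in V (- v)"
            proof
              assume "unit_in V (- v)"
              then have "v \<noteq> 0" "- inverse v \<in> V" by (auto simp: unit_in_def inverse_minus_eq)
              then have "inverse v \<in> V" using subring_uminus[OF V(1)] by fastforce
              then show False using vnu \<open>v \<noteq> 0\<close> by (simp add: unit_in_def)
            qed
            have "coeff q' j \<in> V" "- v \<in> V" using q'V vV subring_uminus[OF V(1)] by auto
            then have "\<not> unit_in V (coeff q' j + - v)" using V(2) nu mv unfolding localr_def by blast
            then show False using less(4) cj by simp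
          qed
        qed
        then show ?thesis using less(1)[OF dq' q'V pq'] by blast
      qed
    qed
  qed
qed

lemma seminormal_valring:
  assumes V: "subring V" "localr V" "integrally_closed V"
    and sn: "\<And>T. overring V T \<Longrightarrow> seminormal T"
  shows "valring V"
proof -
  have "u \<in> V \<or> inverse u \<in> V" for u
  proof -
    define T where "T = {poly p u | p. (\<forall>i. coeff p i \<in> V) \<and> coeff p 1 = 0}"
    have TI: "poly p u \<in> T" if "\<forall>i. coeff p i \<in> V" "coeff p 1 = 0" for p
      unfolding T_def using that by blast
    have TE: "\<exists>p. x = poly p u \<and> (\<forall>i. coeff p i \<in> V) \<and> coeff p 1 = 0" if "x \<in> T" for x
      using that unfolding T_def by auto
    have V0: "0 \<in> V" and V1: "1 \<in> V" using V by (auto simp: subring_0 subring_1)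
    have "subring T" unfolding subring_def
    proof (intro conjI ballI)
      have "poly 0 u \<in> T" by (rule TI) (use V0 in auto)
      then show "0 \<in> T" by simp
      have "\<forall>i. coeff (1::'a poly) i \<in> V" using V0 V1 by (simp add: coeff_1)
      then have "poly 1 u \<in> T" by (intro TI) (auto simp: coeff_1)
      then show "1 \<in> T" by simp
      fix x y assume "x \<in> T" "y \<in> T"
      then obtain p r where p: "x = poly p u" "\<forall>i. coeff p i \<in> V" "coeff p 1 = 0"
        and r: "y = poly r u" "\<forall>i. coeff r i \<in> V" "coeff r 1 = 0" using TE by meson
      have "poly (p + r) u \<in> T" by (rule TI) (use p r V in \<open>auto intro: subring_add\<close>)
      then show "x + y \<in> T" using p r by simp
      have "poly (p - r) u \<in> T" by (rule TI) (use p r V in \<open>auto intro: subring_diff\<close>)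
      then show "x - y \<in> T" using p r by simp
      have "\<forall>i. coeff (p * r) i \<in> V"
      proof
        fix i show "coeff (p * r) i \<in> V" unfolding coeff_mult
          by (intro subring_sum[OF V(1)] subring_mult[OF V(1)]) (use p r in auto)
      qed
      moreover have "coeff (p * r) 1 = 0"
      proof -
        have "{..1::nat} = {0, 1}" by auto
        then show ?thesis using p r by (simp add: coeff_mult)
      qed
      ultimately have "poly (p * r) u \<in> T" by (rule TI)
      then show "x * y \<in> T" using p r by simp
    qed
    moreover have "V \<subseteq> T"
    proof
      fix a assume a: "a \<in> V"
      have "\<forall>i. coeff [:a:] i \<in> V" using a V0 by (simp add: coeff_pCons split: nat.split)
      then have "poly [:a:] u \<in> T" by (rule TI) simp
      then show "a \<in> T" by simp
    qed
    ultimately have sT: "seminormal T" using sn by (simp add: overring_def)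
    have "poly (monom 1 2) u \<in> T" by (rule TI) (use V0 V1 in auto)
    moreover have "poly (monom 1 3) u \<in> T" by (rule TI) (use V0 V1 in auto)
    ultimately have "u ^ 2 \<in> T \<and> u ^ 3 \<in> T" by (simp add: poly_monom)
    then have "u \<in> T" using sT unfolding seminormal_def by blast
    then obtain p where p: "u = poly p u" "\<forall>i. coeff p i \<in> V" "coeff p 1 = 0" using TE by blast
    define q where "q = p - monom 1 1"
    have qV: "\<forall>i. coeff q i \<in> V"
    proof
      fix i show "coeff q i \<in> V" unfolding q_def coeff_diff coeff_monom
        by (intro subring_diff[OF V(1)]) (use p V0 V1 in auto)
    qed
    have pq: "poly q u = 0" using p(1) by (simp add: q_def poly_monom)
    have uq: "unit_in V (coeff q 1)" using p V1 subring_uminus[OF V(1) V1] by (simp add: q_def unit_in_def)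
    show ?thesis by (rule kap[OF V(1-3) qV pq uq])
  qed
  then show ?thesis using V by (simp add: valring_def)
qed

lemma dq_subring: "domain_with_qf D \<Longrightarrow> subring D" by (simp add: domain_with_qf_def)

lemma dq_frac: "domain_with_qf D \<Longrightarrow> \<exists>a\<in>D. \<exists>b\<in>D. b \<noteq> 0 \<and> x = a / b"
  by (simp add: domain_with_qf_def)

lemma nonzero_mclosed: "subring (D::'K::field set) \<Longrightarrow> mclosed D (D - {0})"
  by (auto simp: mclosed_def subring_1 subring_mult)

lemma common_denom:
  assumes D: "subring D" and M: "mclosed D M" and A: "finite A" "A \<subseteq> fracs D M"
  shows "\<exists>m\<in>M. \<forall>a\<in>A. m * a \<in> D"
  using A
proof (induction A rule: finite_induct)
  case empty then show ?case using M by (auto simp: mclosed_def)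
next
  case (insert a A)
  then obtain m where m: "m \<in> M" "\<forall>b\<in>A. m * b \<in> D" by blast
  obtain t s where ts: "t \<in> D" "s \<in> M" "a = t / s" using insert(4) by (auto elim: fracsE)
  have s0: "s \<noteq> 0" "s \<in> D" "m \<in> D" using ts m M by (auto simp: mclosed_def)
  have "m * s \<in> M" using m ts M by (auto simp: mclosed_def)
  moreover have "(m * s) * a = m * t" using s0 ts by simp
  then have "(m * s) * a \<in> D" using s0 ts subring_mult[OF D] by simp
  moreover have "(m * s) * b \<in> D" if "b \<in> A" for b
  proof -
    have "(m * s) * b = s * (m * b)" by (simp add: algebra_simps)
    moreover have "m * b \<in> D" using m that by blast
    ultimately show ?thesis using s0 subring_mult[OF D] by metis
  qed
  ultimately show ?case by blast
qed

lemma min_elem: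
  assumes W: "valring W" and S: "finite S"
  shows "(\<exists>s\<in>S. s \<noteq> 0) \<Longrightarrow> \<exists>a\<in>S. a \<noteq> 0 \<and> (\<forall>s\<in>S. s / a \<in> W)"
  using S
proof (induction S rule: finite_induct)
  case empty then show ?case by simp
next
  case (insert b S)
  have Ws: "subring W" using W by (simp add: valring_def)
  show ?case
  proof (cases "\<exists>s\<in>S. s \<noteq> 0")
    case False
    then have b0: "b \<noteq> 0" using insert by auto
    have "\<forall>s\<in>insert b S. s / b \<in> W" using False b0 subring_0[OF Ws] subring_1[OF Ws] by auto
    then show ?thesis using b0 by blast
  next
    case True
    then obtain a where a: "a \<in> S" "a \<noteq> 0" "\<forall>s\<in>S. s / a \<in> W" using insert by blast
    show ?thesis
    proof (cases "b / a \<in> W")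
      case True then show ?thesis using a by auto
    next
      case False
      then have b0: "b \<noteq> 0" using subring_0[OF Ws] by auto
      have "b / a \<noteq> 0" using a b0 by simp
      then have "b / a \<in> W \<or> inverse (b / a) \<in> W" using W unfolding valring_def by blast
      then have ab: "a / b \<in> W" using False by simp
      have "s / b \<in> W" if "s \<in> insert b S" for s
      proof (cases "s = b")
        case True then show ?thesis using b0 subring_1[OF Ws] by simp
      next
        case False
        then have "s \<in> S" using that by simp
        then have "(s / a) * (a / b) \<in> W" using a ab subring_mult[OF Ws] by blast
        then show ?thesis using a by simp
      qed
      then show ?thesis using b0 by blast
    qed
  qed
qed

lemma colonI: "(\<And>e. e \<in> F \<Longrightarrow> x * e \<in> D) \<Longrightarrow> x \<in> colon D F"
  by (simp add: colon_def)

lemma colon_span: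
  assumes D: "subring D" and h: "\<And>s. s \<in> S \<Longrightarrow> x * s \<in> D"
  shows "x \<in> colon D (span D S)"
proof (rule colonI)
  fix e assume "e \<in> span D S"
  then obtain c where c: "\<forall>s. c s \<in> D" "e = (\<Sum>s\<in>S. c s * s)" by (rule span_memE)
  have "x * e = (\<Sum>s\<in>S. c s * (x * s))" by (simp add: c sum_distrib_left algebra_simps)
  also have "\<dots> \<in> D" by (rule subring_sum[OF D], rule subring_mult[OF D]) (use c h in auto)
  finally show "x * e \<in> D" .
qed

lemma setprod_span:
  assumes D: "subring D" and T: "subring T" "D \<subseteq> T" and S: "finite S"
  shows "setprod (span D S) T = span T S"
proof
  show "setprod (span D S) T \<subseteq> span T S"
  proof (rule setprod_sub)
    fix e f assume ef: "e \<in> span D S" "f \<in> T"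
    then obtain c where c: "\<forall>s. c s \<in> D" "e = (\<Sum>s\<in>S. c s * s)" by (auto elim: span_memE)
    have "e * f = (\<Sum>s\<in>S. (c s * f) * s)" unfolding c(2) sum_distrib_right
      by (rule sum.cong) (simp_all add: algebra_simps)
    moreover have "\<forall>s. c s * f \<in> T" using c ef T by (auto intro: subring_mult)
    ultimately show "e * f \<in> span T S" by (intro span_memI) auto
  next
    show "0 \<in> span T S" using span_submod[OF T(1)] submod_0 by blast
    show "x + y \<in> span T S" if "x \<in> span T S" "y \<in> span T S" for x y
      using span_submod[OF T(1)] submod_add that by blast
  qed
  show "span T S \<subseteq> setprod (span D S) T"
  proof
    fix z assume "z \<in> span T S"
    then obtain c where c: "\<forall>s. c s \<in> T" "z = (\<Sum>s\<in>S. c s * s)" by (rule span_memE)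
    have "(\<Sum>s\<in>S. s * c s) \<in> setprod (span D S) T"
      by (rule setprod_sum, rule setprod_prod) (use c span_mem[OF S _ D] in auto)
    then show "z \<in> setprod (span D S) T" using c by (simp add: mult.commute)
  qed
qed

section \<open>Localization at quasi-maximal ideals\<close>

lemma qmax_facts:
  assumes D: "subring D" and st: "semistar D st" and Q: "quasi_max D (star_f D st) Q"
  shows "prime_of D Q" "mclosed D (D - Q)" "subring (fracs D (D - Q))" "D \<subseteq> fracs D (D - Q)"
    "ideal_of D Q" "Q \<noteq> D" "0 \<in> Q" "1 \<notin> Q" "star_f D st Q \<inter> D = Q"
proof -
  show P: "prime_of D Q" by (rule quasi_max_prime[OF D st Q])
  show M: "mclosed D (D - Q)" by (rule prime_mclosed_D[OF P D])
  show "subring (fracs D (D - Q))" by (rule fracs_subring[OF D M])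
  show "D \<subseteq> fracs D (D - Q)" using M by (intro fracs_base) (auto simp: mclosed_def)
  show "ideal_of D Q" "Q \<noteq> D" "star_f D st Q \<inter> D = Q" using Q by (auto simp: quasi_max_def quasi_ideal_def)
  then show "0 \<in> Q" by (simp add: ideal_of_def submod_def)
  show "1 \<notin> Q" using M by (auto simp: mclosed_def)
qed

lemma loc_localr:
  assumes D: "subring D" and P: "prime_of D Q"
  shows "localr (fracs D (D - Q))"
proof -
  let ?V = "fracs D (D - Q)"
  have M: "mclosed D (D - Q)" by (rule prime_mclosed_D[OF P D])
  have Qi: "ideal_of D Q" "0 \<in> Q" "Q \<subseteq> D" using P by (auto simp: prime_of_def ideal_of_def submod_def)
  have pr: "\<And>x y. x \<in> D \<Longrightarrow> y \<in> D \<Longrightarrow> x * y \<in> Q \<Longrightarrow> x \<in> Q \<or> y \<in> Q" using P by (auto simp: prime_of_def)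
  have Qm: "\<And>t x. t \<in> D \<Longrightarrow> x \<in> Q \<Longrightarrow> t * x \<in> Q" "\<And>x y. x \<in> Q \<Longrightarrow> y \<in> Q \<Longrightarrow> x + y \<in> Q"
    using Qi by (auto simp: ideal_of_def submod_def)
  have nu: "\<exists>x s. x \<in> Q \<and> s \<in> D - Q \<and> a = x / s" if aV: "a \<in> ?V" "\<not> unit_in ?V a" for a
  proof -
    obtain x s where xs: "x \<in> D" "s \<in> D - Q" "a = x / s" using aV(1) by (auto elim: fracsE)
    have "x \<in> Q"
    proof (rule ccontr)
      assume "x \<notin> Q"
      then have "x \<noteq> 0" "s \<noteq> 0" using Qi xs by auto
      moreover have "inverse a = s / x" using xs by simp
      moreover have "s / x \<in> ?V" using xs \<open>x \<notin> Q\<close> by (intro fracsI[of s D x]) auto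
      ultimately show False using aV(2) xs by (simp add: unit_in_def)
    qed
    then show ?thesis using xs by blast
  qed
  have un: "\<not> unit_in ?V a" if "x \<in> Q" "s \<in> D - Q" "a = x / s" for a x s
  proof
    assume u: "unit_in ?V a"
    then have a0: "a \<noteq> 0" "inverse a \<in> ?V" by (auto simp: unit_in_def)
    obtain y t where yt: "y \<in> D" "t \<in> D - Q" "inverse a = y / t" using a0(2) by (auto elim: fracsE)
    have x0: "x \<noteq> 0" "s \<noteq> 0" "t \<noteq> 0" using a0 that yt Qi by auto
    have "s / x = y / t" using yt that by simp
    then have "s * t = x * y" using x0 by (simp add: field_simps)
    moreover have "x * y \<in> Q" using Qm(1)[OF yt(1) that(1)] by (simp add: mult.commute)
    ultimately have "s * t \<in> Q" by simp
    then show False using pr[of s t] that yt by auto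
  qed
  show ?thesis unfolding localr_def
  proof (intro ballI impI)
    fix a b assume ab: "a \<in> ?V" "b \<in> ?V" "\<not> unit_in ?V a" "\<not> unit_in ?V b"
    obtain x s where xs: "x \<in> Q" "s \<in> D - Q" "a = x / s" using nu ab by blast
    obtain y t where yt: "y \<in> Q" "t \<in> D - Q" "b = y / t" using nu ab by blast
    have s0: "s \<noteq> 0" "t \<noteq> 0" using xs yt Qi by auto
    have "a + b = (x * t + y * s) / (s * t)" using s0 xs yt by (simp add: field_simps)
    moreover have "x * t + y * s \<in> Q" using Qm xs yt by (simp add: mult.commute)
    moreover have "s * t \<in> D - Q" using M xs yt by (auto simp: mclosed_def)
    ultimately show "\<not> unit_in ?V (a + b)" by (intro un) auto
  qed
qed

lemma loc_dlinked:
  assumes D: "subring D" and st: "semistar D st" and Q: "quasi_max D (star_f D st) Q"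
    and T: "overring D T" "fracs D (D - Q) \<subseteq> T"
  shows "linked D st T (d_op T)"
  unfolding linked_def
proof (intro allI impI)
  fix F assume F: "F \<in> fgF D \<and> F \<subseteq> D \<and> st F = st D"
  note qf = qmax_facts[OF D st Q]
  have "\<not> F \<subseteq> Q"
  proof
    assume FQ: "F \<subseteq> Q"
    have "1 \<in> st D" using ss_ext[OF st subring_Fbar[OF D]] subring_1[OF D] by blast
    then have "1 \<in> st F" using F by simp
    then have "1 \<in> star_f D st Q" using F FQ by (blast intro: starf_memI)
    then show False using qf(8,9) subring_1[OF D] by blast
  qed
  then obtain f where f: "f \<in> F" "f \<notin> Q" by blast
  have fD: "f \<in> D" "f \<noteq> 0" using f F qf(7) by auto
  have Ts: "subring T" "D \<subseteq> T" using T by (auto simp: overring_def)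
  have fi: "inverse f \<in> T" using fracs_inv[OF subring_1[OF D], of f "D - Q"] fD f T by auto
  have "setprod F T = T"
  proof
    show "setprod F T \<subseteq> T"
      by (rule setprod_sub) (use F Ts in \<open>auto intro: subring_mult subring_add subring_0\<close>)
    show "T \<subseteq> setprod F T"
    proof
      fix t assume "t \<in> T"
      then have "f * (inverse f * t) \<in> setprod F T" using f fi Ts by (intro setprod_prod) (auto intro: subring_mult)
      moreover have "f * (inverse f * t) = t" using fD by (simp add: mult.assoc[symmetric])
      ultimately show "t \<in> setprod F T" by simp
    qed
  qed
  then show "d_op T (setprod F T) = d_op T T" by (simp add: d_op_def)
qed

lemma stilde_sub_loc:
  assumes T: "subring T" and st: "semistar T st'" and N: "quasi_max T (star_f T st') N"
  shows "stilde T st' T \<subseteq> fracs T (T - N)"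
proof -
  note qf = qmax_facts[OF T st N]
  have "setprod T (fracs T (T - N)) = fracs T (T - N)"
    by (rule setprod_ring_eq[OF qf(3) qf(4) subring_1[OF T]])
  then show ?thesis unfolding stilde_def using N by blast
qed

lemma stilde_base:
  assumes T: "subring T" shows "T \<subseteq> stilde T st' T"
  unfolding stilde_def
proof (rule Inter_greatest)
  fix X assume "X \<in> {setprod T (fracs T (T - Q)) |Q. quasi_max T (star_f T st') Q}"
  then obtain Q where Q: "X = setprod T (fracs T (T - Q))" "quasi_max T (star_f T st') Q" by blast
  have "1 \<notin> Q" using Q(2) ideal_one subring_1[OF T] by (auto simp: quasi_max_def quasi_ideal_def)
  then have one: "1 \<in> fracs T (T - Q)" using subring_1[OF T] by (intro fracsI[of 1 T 1]) auto
  show "T \<subseteq> X"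
  proof
    fix t assume "t \<in> T"
    then have "t * 1 \<in> setprod T (fracs T (T - Q))" using one by (intro setprod_prod)
    then show "t \<in> X" using Q by simp
  qed
qed

lemma stilde_uminus:
  assumes T: "subring T" "x \<in> stilde T st' T" shows "- x \<in> stilde T st' T"
  using assms unfolding stilde_def
  by (auto intro!: setprod_uminus intro: subring_uminus)

lemma loc_ic:
  assumes D: "subring D" and st: "semistar D st" and Q: "quasi_max D (star_f D st) Q"
    and ic: "integrally_closed (stilde D st D)"
  shows "integrally_closed (fracs D (D - Q))"
  unfolding ic_def2
proof (intro allI impI)
  let ?V = "fracs D (D - Q)"
  note qf = qmax_facts[OF D st Q]
  fix x assume "integral_over ?V x"
  then obtain n b where b: "\<And>i. b i \<in> ?V" and eq: "x ^ n + (\<Sum>i<n. b i * x ^ i) = 0"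
    using integral_overE by blast
  obtain m where m: "m \<in> D - Q" "\<forall>a\<in>b ` {..<n}. m * a \<in> D"
    using common_denom[OF D qf(2), of "b ` {..<n}"] b by blast
  have m0: "m \<noteq> 0" using m qf(7) by auto
  have "integral_over D (m * x)"
  proof (rule integral_overI[of n "\<lambda>i. b i * m ^ (n - i)"])
    show "b i * m ^ (n - i) \<in> D" if "i < n" for i
    proof -
      have "m ^ (n - i) = m * m ^ (n - i - 1)" using that by (simp add: power_eq_if)
      then have "b i * m ^ (n - i) = (m * b i) * m ^ (n - i - 1)" by (simp add: algebra_simps)
      moreover have "m * b i \<in> D" using m that by auto
      moreover have "m ^ (n - i - 1) \<in> D" using m subring_power[OF D] by blast
      ultimately show ?thesis using subring_mult[OF D] by metis
    qed
    show "0 \<in> D" "1 \<in> D" using D by (auto simp: subring_0 subring_1)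
    have e: "b i * m ^ (n - i) * (m * x) ^ i = m ^ n * (b i * x ^ i)" if "i < n" for i
    proof -
      have "m ^ n = m ^ (n - i) * m ^ i" using that by (simp add: power_add[symmetric])
      then show ?thesis by (simp add: power_mult_distrib algebra_simps)
    qed
    have "(\<Sum>i<n. b i * m ^ (n - i) * (m * x) ^ i) = (\<Sum>i<n. m ^ n * (b i * x ^ i))"
      by (rule sum.cong[OF refl]) (use e in auto)
    then have "(m * x) ^ n + (\<Sum>i<n. b i * m ^ (n - i) * (m * x) ^ i) = m ^ n * (x ^ n + (\<Sum>i<n. b i * x ^ i))"
      by (simp only: sum_distrib_left[symmetric] distrib_left power_mult_distrib)
    then show "(m * x) ^ n + (\<Sum>i<n. b i * m ^ (n - i) * (m * x) ^ i) = 0" using eq by simp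
  qed
  then have "integral_over (stilde D st D) (m * x)" using stilde_base[OF D] integral_mono by blast
  then have "m * x \<in> stilde D st D" using ic by (simp add: ic_def2)
  then have mx: "m * x \<in> ?V" using stilde_sub_loc[OF D st Q] by blast
  have "inverse m \<in> ?V" using fracs_inv[OF subring_1[OF D] m(1)] .
  then have "inverse m * (m * x) \<in> ?V" using mx qf(3) by (simp add: subring_mult)
  moreover have "inverse m * (m * x) = x" using m0 by (simp add: mult.assoc[symmetric])
  ultimately show "x \<in> ?V" by simp
qed

section \<open>P-star-MD versus valuation localizations\<close>

lemma val_PMD:
  assumes Dq: "domain_with_qf D" and st: "semistar D st"
    and V: "\<And>Q. quasi_max D (star_f D st) Q \<Longrightarrow> valring (fracs D (D - Q))"
  shows "PstarMD D st"
  unfolding PstarMD_def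
proof
  fix F assume F: "F \<in> fgF D"
  have D: "subring D" using Dq by (rule dq_subring)
  obtain S where S: "finite S" "F = span D S" "F \<noteq> {0}" using fgF_D[OF F] by blast
  define E where "E = setprod F (colon D F)"
  have Fsm: "submod D F" using S span_submod[OF D] by simp
  have SF: "S \<subseteq> F" using S span_mem[OF _ _ D] by blast
  have ED: "E \<subseteq> D" unfolding E_def
  proof (rule setprod_sub)
    fix e y assume "e \<in> F" "y \<in> colon D F"
    then show "e * y \<in> D" by (simp add: colon_def mult.commute)
  qed (use D in \<open>auto intro: subring_0 subring_add\<close>)
  have EI: "ideal_of D E" unfolding ideal_of_def submod_def
    using ED setprod_zero setprod_add setprod_lmult[of F _ _ "colon D F"] submod_mult[OF Fsm]
    by (auto simp: E_def)
  obtain s0 where s0: "s0 \<in> S" "s0 \<noteq> 0" using span_zero[OF D] S by blast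
  have "S \<subseteq> fracs D (D - {0})"
  proof
    fix s assume "s \<in> S"
    obtain a b where "a \<in> D" "b \<in> D" "b \<noteq> 0" "s = a / b" using dq_frac[OF Dq, of s] by blast
    then show "s \<in> fracs D (D - {0})" by (intro fracsI[of a D b]) auto
  qed
  then obtain m where m: "m \<in> D - {0}" "\<forall>s\<in>S. m * s \<in> D"
    using common_denom[OF D nonzero_mclosed[OF D] S(1)] by blast
  have "m \<in> colon D F" using S(2) colon_span[OF D, of S m] m by blast
  then have "s0 * m \<in> E" using SF s0 unfolding E_def by (intro setprod_prod) auto
  then have Enz: "E \<noteq> {0}" using s0 m by auto
  have one: "1 \<in> star_f D st E"
  proof (rule ccontr)
    assume n1: "1 \<notin> star_f D st E"
    obtain Q where Q: "quasi_max D (star_f D st) Q" "E \<subseteq> Q" using quasi_zorn[OF D st EI Enz n1] by blast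
    note qf = qmax_facts[OF D st Q(1)]
    have VQ: "valring (fracs D (D - Q))" by (rule V[OF Q(1)])
    obtain a where a: "a \<in> S" "a \<noteq> 0" "\<forall>s\<in>S. s / a \<in> fracs D (D - Q)"
      using min_elem[OF VQ S(1)] s0 by blast
    have "(\<lambda>s. s / a) ` S \<subseteq> fracs D (D - Q)" using a by blast
    then obtain t where t: "t \<in> D - Q" "\<forall>z\<in>(\<lambda>s. s / a) ` S. t * z \<in> D"
      using common_denom[OF D qf(2), of "(\<lambda>s. s / a) ` S"] S(1) by blast
    have "\<And>s. s \<in> S \<Longrightarrow> (t / a) * s \<in> D"
    proof -
      fix s assume "s \<in> S"
      then have "t * (s / a) \<in> D" using t by blast
      then show "(t / a) * s \<in> D" by (simp add: algebra_simps)
    qed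
    then have "t / a \<in> colon D F" using S(2) colon_span[OF D, of S "t / a"] by blast
    then have "a * (t / a) \<in> E" using SF a unfolding E_def by (intro setprod_prod) auto
    then have "t \<in> E" using a by simp
    then show False using t Q by auto
  qed
  then obtain G where G: "G \<in> fgF D" "G \<subseteq> E" "1 \<in> st G" by (rule starf_memE)
  have "st G = st D" using ss_one[OF D st fgF_Fbar[OF G(1)] _ G(3)] G ED by blast
  then have "st D \<subseteq> star_f D st E" using starf_subI[OF G(1,2), of st] by simp
  moreover have "star_f D st E \<subseteq> st D" by (rule starf_sub_st[OF D st ED])
  ultimately show "star_f D st (setprod F (colon D F)) = st D" by (simp add: E_def)
qed

lemma PMD_val:
  assumes Dq: "domain_with_qf D" and st: "semistar D st" and P: "PstarMD D st"
    and Q: "quasi_max D (star_f D st) Q"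
  shows "valring (fracs D (D - Q))"
proof -
  have D: "subring D" using Dq by (rule dq_subring)
  note qf = qmax_facts[OF D st Q]
  have Qs: "submod D Q" using qf(5) by (simp add: ideal_of_def)
  have "u \<in> fracs D (D - Q) \<or> inverse u \<in> fracs D (D - Q)" if u0: "u \<noteq> 0" for u
  proof -
    obtain a b where ab: "a \<in> D" "b \<in> D" "b \<noteq> 0" "u = a / b" using dq_frac[OF Dq, of u] by blast
    have a0: "a \<noteq> 0" using ab u0 by auto
    define F where "F = span D {a, b}"
    have F: "F \<in> fgF D" unfolding F_def by (rule fgF_span[OF _ D, of _ b]) (use ab in auto)
    have aF: "a \<in> F" "b \<in> F" unfolding F_def using span_mem[OF _ _ D] by auto
    define E where "E = setprod F (colon D F)"
    have "star_f D st E = st D" using P F by (simp add: PstarMD_def E_def)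
    moreover have "1 \<in> st D" using ss_ext[OF st subring_Fbar[OF D]] subring_1[OF D] by blast
    ultimately have "1 \<in> star_f D st E" by simp
    then obtain G where G: "G \<in> fgF D" "G \<subseteq> E" "1 \<in> st G" by (rule starf_memE)
    have "\<not> E \<subseteq> Q"
    proof
      assume "E \<subseteq> Q"
      then have "1 \<in> star_f D st Q" using G by (blast intro: starf_memI)
      then show False using qf(8,9) subring_1[OF D] by blast
    qed
    then have "\<exists>f\<in>F. \<exists>y\<in>colon D F. f * y \<notin> Q"
      using setprod_sub[of F "colon D F" Q] submod_0[OF Qs] submod_add[OF Qs] unfolding E_def by blast
    then obtain f y where fy: "f \<in> F" "y \<in> colon D F" "f * y \<notin> Q" by blast
    have ayD: "a * y \<in> D" "b * y \<in> D" using fy(2) aF by (auto simp: colon_def mult.commute)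
    have "a * y \<notin> Q \<or> b * y \<notin> Q"
    proof (rule ccontr)
      assume "\<not> (a * y \<notin> Q \<or> b * y \<notin> Q)"
      then have h: "\<forall>s\<in>{a, b}. s * y \<in> Q" by auto
      obtain c where c: "\<forall>s. c s \<in> D" "f = (\<Sum>s\<in>{a, b}. c s * s)" using fy(1) unfolding F_def by (rule span_memE)
      have "f * y = (\<Sum>s\<in>{a, b}. c s * (s * y))" unfolding c(2) sum_distrib_right
        by (rule sum.cong) (simp_all add: algebra_simps)
      also have "\<dots> \<in> Q" by (rule submod_sum[OF Qs], rule submod_mult[OF Qs]) (use h c(1) in auto)
      finally show False using fy(3) by simp
    qed
    then show ?thesis
    proof
      assume ay: "a * y \<notin> Q"
      then have "a * y \<noteq> 0" using qf(7) by auto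
      then have y0: "y \<noteq> 0" by auto
      have "inverse u = (b * y) / (a * y)" using ab(4) a0 ab(3) y0 by simp
      moreover have "(b * y) / (a * y) \<in> fracs D (D - Q)" using ayD ay by (intro fracsI[of "b * y" D "a * y"]) auto
      ultimately show ?thesis by simp
    next
      assume bQ: "b * y \<notin> Q"
      then have "b * y \<noteq> 0" using qf(7) by auto
      then have y0: "y \<noteq> 0" by auto
      have "u = (a * y) / (b * y)" using ab y0 by (simp add: field_simps)
      moreover have "(a * y) / (b * y) \<in> fracs D (D - Q)" using ayD bQ by (intro fracsI[of "a * y" D "b * y"]) auto
      ultimately show ?thesis by simp
    qed
  qed
  then show ?thesis using qf(3) by (simp add: valring_def)
qed

lemma ov_facts: "overring D T \<Longrightarrow> subring T \<and> D \<subseteq> T" by (simp add: overring_def)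

lemma ov_qf:
  assumes "domain_with_qf D" "overring D T"
  shows "\<forall>x. \<exists>a\<in>T. \<exists>b\<in>T. b \<noteq> 0 \<and> x = a / b"
  using assms by (auto simp: domain_with_qf_def overring_def) blast

lemma Jset_ideal:
  assumes T: "subring T"
  shows "ideal_of T {t \<in> T. t * x \<in> T}"
  unfolding ideal_of_def submod_def
proof (intro conjI ballI)
  show "0 \<in> {t \<in> T. t * x \<in> T}" using subring_0[OF T] by simp
  fix a b assume "a \<in> {t \<in> T. t * x \<in> T}" "b \<in> {t \<in> T. t * x \<in> T}"
  then show "a + b \<in> {t \<in> T. t * x \<in> T}" using subring_add[OF T] by (simp add: distrib_right)
next
  fix r a assume "r \<in> T" "a \<in> {t \<in> T. t * x \<in> T}"
  then show "r * a \<in> {t \<in> T. t * x \<in> T}" using subring_mult[OF T] by (simp add: mult.assoc)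
qed auto

lemma Jset_nonzero:
  assumes T: "subring T" and qf: "\<forall>x. \<exists>a\<in>T. \<exists>b\<in>T. b \<noteq> 0 \<and> x = a / b"
  shows "\<exists>b\<in>T. b \<noteq> 0 \<and> b * x \<in> T"
proof -
  obtain a b where "a \<in> T" "b \<in> T" "b \<noteq> 0" "x = a / b" using qf by blast
  then show ?thesis by (intro bexI[of _ b]) auto
qed

lemma d_semistar: "semistar T (d_op T)"
  by (simp add: semistar_def d_op_def)

lemma stilde_d:
  assumes T: "subring T" and qf: "\<forall>x. \<exists>a\<in>T. \<exists>b\<in>T. b \<noteq> 0 \<and> x = a / b"
  shows "stilde T (d_op T) T = T"
proof
  show "T \<subseteq> stilde T (d_op T) T" by (rule stilde_base[OF T])
  show "stilde T (d_op T) T \<subseteq> T"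
  proof
    fix x assume x: "x \<in> stilde T (d_op T) T"
    define J where "J = {t \<in> T. t * x \<in> T}"
    have JI: "ideal_of T J" unfolding J_def by (rule Jset_ideal[OF T])
    obtain b where b: "b \<in> T" "b \<noteq> 0" "b * x \<in> T" using Jset_nonzero[OF T qf] by blast
    have Jnz: "J \<noteq> {0}" using b by (auto simp: J_def)
    show "x \<in> T"
    proof (cases "1 \<in> star_f T (d_op T) J")
      case True
      then obtain G where "G \<subseteq> J" "1 \<in> d_op T G" by (rule starf_memE)
      then have "1 \<in> J" by (auto simp: d_op_def)
      then show ?thesis by (simp add: J_def)
    next
      case False
      obtain N where N: "quasi_max T (star_f T (d_op T)) N" "J \<subseteq> N"
        using quasi_zorn[OF T d_semistar JI Jnz False] by blast
      note qf = qmax_facts[OF T d_semistar N(1)]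
      have "x \<in> fracs T (T - N)" using stilde_sub_loc[OF T d_semistar N(1)] x by blast
      then obtain t s where ts: "t \<in> T" "s \<in> T - N" "x = t / s" by (rule fracsE)
      have "s \<noteq> 0" using ts qf(7) by auto
      then have "s * x = t" using ts by simp
      then have "s \<in> J" using ts by (simp add: J_def)
      then show ?thesis using N ts by auto
    qed
  qed
qed

lemma dlinked_tlinked: "linked D st T (d_op T) \<Longrightarrow> t_linked D st T"
  by (simp add: linked_def t_linked_def d_op_def)

lemma self_linked:
  assumes D: "subring D" shows "linked D st D st"
  unfolding linked_def
proof (intro allI impI)
  fix F assume F: "F \<in> fgF D \<and> F \<subseteq> D \<and> st F = st D"
  have Fsm: "submod D F" using F by (auto simp: fgF_def Fbar_def)
  have "setprod F D = F"
  proof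
    show "setprod F D \<subseteq> F"
    proof (rule setprod_sub)
      fix e f assume "e \<in> F" "f \<in> D"
      then show "e * f \<in> F" using submod_mult[OF Fsm, of f e] by (simp add: mult.commute)
    qed (use Fsm submod_0 submod_add in auto)
    show "F \<subseteq> setprod F D"
    proof
      fix e assume "e \<in> F"
      then have "e * 1 \<in> setprod F D" using subring_1[OF D] by (intro setprod_prod)
      then show "e \<in> setprod F D" by simp
    qed
  qed
  then show "st (setprod F D) = st D" using F by simp
qed

section \<open>From valuation localizations to the conditions\<close>

lemma c1_from_val:
  assumes Dq: "domain_with_qf D" and st: "semistar D st"
    and V: "\<And>Q. quasi_max D (star_f D st) Q \<Longrightarrow> valring (fracs D (D - Q))"
    and T: "overring D T" and st': "semistar T st'" and L: "linked D st T st'"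
  shows "integrally_closed (stilde T st' T)"
  unfolding ic_def2
proof (intro allI impI)
  fix x assume x: "integral_over (stilde T st' T) x"
  have D: "subring D" using Dq by (rule dq_subring)
  have Ts: "subring T" "D \<subseteq> T" using T by (auto simp: overring_def)
  show "x \<in> stilde T st' T" unfolding stilde_def
  proof (rule InterI)
    fix X assume "X \<in> {setprod T (fracs T (T - N)) |N. quasi_max T (star_f T st') N}"
    then obtain N where N: "X = setprod T (fracs T (T - N))" "quasi_max T (star_f T st') N" by blast
    note qfN = qmax_facts[OF Ts(1) st' N(2)]
    define W where "W = fracs T (T - N)"
    have XW: "X = W" using setprod_ring_eq[OF qfN(3) qfN(4) subring_1[OF Ts(1)]] N by (simp add: W_def)
    have Nsm: "submod T N" using qfN(5) by (simp add: ideal_of_def)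
    define P where "P = N \<inter> D"
    have PI: "ideal_of D P" unfolding ideal_of_def submod_def P_def
      using Nsm Ts subring_mult[OF D] subring_add[OF D] subring_0[OF D]
      by (auto simp: submod_def)
    have Pnz: "P \<noteq> {0}"
    proof -
      have "N \<noteq> {0}" using N(2) by (simp add: quasi_max_def quasi_ideal_def)
      then obtain n where n: "n \<in> N" "n \<noteq> 0" using submod_0[OF Nsm] by blast
      obtain a b where ab: "a \<in> D" "b \<in> D" "b \<noteq> 0" "n = a / b" using dq_frac[OF Dq, of n] by blast
      have "b \<in> T" using ab Ts by auto
      then have bn: "b * n \<in> N" using submod_mult[OF Nsm] n by blast
      have "b * n = a" using ab by simp
      then have "a \<in> N" using bn by metis
      then have "a \<in> P" using ab by (simp add: P_def)
      moreover have "a \<noteq> 0" using ab n by auto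
      ultimately show ?thesis by blast
    qed
    have n1: "1 \<notin> star_f D st P"
    proof
      assume "1 \<in> star_f D st P"
      then obtain G where G: "G \<in> fgF D" "G \<subseteq> P" "1 \<in> st G" by (rule starf_memE)
      have GD: "G \<subseteq> D" using G by (auto simp: P_def)
      have "st G = st D" using ss_one[OF D st fgF_Fbar[OF G(1)] GD G(3)] .
      then have eq: "st' (setprod G T) = st' T" using L G GD by (simp add: linked_def)
      obtain S where S: "finite S" "G = span D S" "G \<noteq> {0}" using fgF_D[OF G(1)] by blast
      obtain s where s: "s \<in> S" "s \<noteq> 0" using span_zero[OF D] S by blast
      have GT: "setprod G T = span T S" using setprod_span[OF D Ts S(1)] S by simp
      have fg: "span T S \<in> fgF T" using fgF_span[OF S(1) Ts(1) s] .
      have "setprod G T \<subseteq> N"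
      proof (rule setprod_sub)
        fix g t assume "g \<in> G" "t \<in> T"
        then have "t * g \<in> N" using G submod_mult[OF Nsm, of t g] by (auto simp: P_def)
        then show "g * t \<in> N" by (simp add: mult.commute)
      qed (use Nsm submod_0 submod_add in auto)
      moreover have "1 \<in> st' T" using ss_ext[OF st' subring_Fbar[OF Ts(1)]] subring_1[OF Ts(1)] by blast
      ultimately have "1 \<in> star_f T st' N" using eq GT fg by (auto intro: starf_memI)
      then show False using qfN(8,9) subring_1[OF Ts(1)] by blast
    qed
    obtain Q where Q: "quasi_max D (star_f D st) Q" "P \<subseteq> Q" using quasi_zorn[OF D st PI Pnz n1] by blast
    have "fracs D (D - Q) \<subseteq> W" unfolding W_def
      by (rule fracs_mono) (use Ts Q in \<open>auto simp: P_def\<close>)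
    then have VW: "valring W" using valring_mono[OF V[OF Q(1)]] qfN(3) by (simp add: W_def)
    have "stilde T st' T \<subseteq> W" using stilde_sub_loc[OF Ts(1) st' N(2)] by (simp add: W_def)
    then have "integral_over W x" using x integral_mono by blast
    then have "x \<in> W" by (rule valring_ic[OF VW])
    then show "x \<in> X" using XW by simp
  qed
qed

lemma c2_from_val:
  assumes Dq: "domain_with_qf D" and st: "semistar D st"
    and V: "\<And>Q. quasi_max D (star_f D st) Q \<Longrightarrow> valring (fracs D (D - Q))"
    and T: "overring D T"
  shows "integrally_closed (ell_op D st T T)"
  unfolding ic_def2
proof (intro allI impI)
  fix x assume x: "integral_over (ell_op D st T T) x"
  have D: "subring D" using Dq by (rule dq_subring)
  have Ts: "subring T" "D \<subseteq> T" using T by (auto simp: overring_def)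
  show "x \<in> ell_op D st T T" unfolding ell_op_def
  proof (rule InterI)
    fix X assume "X \<in> {setprod T (fracs T (D - P)) |P. quasi_prime D (star_f D st) P}"
    then obtain P where P: "X = setprod T (fracs T (D - P))" "quasi_prime D (star_f D st) P" by blast
    have Pp: "prime_of D P" and Pq: "quasi_ideal D (star_f D st) P" using P by (auto simp: quasi_prime_def)
    have M: "mclosed T (D - P)" using mclosed_over[OF prime_mclosed_D[OF Pp D] Ts(2)] .
    define W where "W = fracs T (D - P)"
    have Ws: "subring W" using fracs_subring[OF Ts(1) M] by (simp add: W_def)
    have TW: "T \<subseteq> W" using fracs_base[of "D - P" T] M by (auto simp: W_def mclosed_def)
    have XW: "X = W" using setprod_ring_eq[OF Ws TW subring_1[OF Ts(1)]] P by (simp add: W_def)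
    have PI: "ideal_of D P" "P \<noteq> {0}" "star_f D st P \<inter> D = P" using Pq by (auto simp: quasi_ideal_def)
    have n1: "1 \<notin> star_f D st P"
    proof
      assume "1 \<in> star_f D st P"
      then have "1 \<in> P" using PI subring_1[OF D] by blast
      then show False using ideal_one[OF PI(1)] Pp by (simp add: prime_of_def)
    qed
    obtain Q where Q: "quasi_max D (star_f D st) Q" "P \<subseteq> Q" using quasi_zorn[OF D st PI(1,2) n1] by blast
    have "fracs D (D - Q) \<subseteq> W" unfolding W_def by (rule fracs_mono) (use Ts Q in auto)
    then have VW: "valring W" using valring_mono[OF V[OF Q(1)]] Ws by simp
    have "ell_op D st T T \<subseteq> X" unfolding ell_op_def using P by blast
    then have "integral_over W x" using x integral_mono XW by blast
    then have "x \<in> W" by (rule valring_ic[OF VW])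
    then show "x \<in> X" using XW by simp
  qed
qed

lemma c3_from_val:
  assumes Dq: "domain_with_qf D" and st: "semistar D st"
    and V: "\<And>Q. quasi_max D (star_f D st) Q \<Longrightarrow> valring (fracs D (D - Q))"
    and T: "overring D T" and L: "t_linked D st T"
  shows "integrally_closed T"
  unfolding ic_def2
proof (intro allI impI)
  fix x assume x: "integral_over T x"
  have D: "subring D" using Dq by (rule dq_subring)
  have Ts: "subring T" "D \<subseteq> T" using T by (auto simp: overring_def)
  define J where "J = {t \<in> T. t * x \<in> T}"
  have JI: "ideal_of T J" unfolding J_def by (rule Jset_ideal[OF Ts(1)])
  have Jsm: "submod T J" using JI by (simp add: ideal_of_def)
  have vJ: "v_op T J \<subseteq> J"
  proof
    fix z assume z: "z \<in> v_op T J"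
    have c1: "1 \<in> colon T J" by (auto simp: colon_def J_def)
    have cx: "x \<in> colon T J" by (auto simp: colon_def J_def mult.commute)
    have "\<forall>y\<in>colon T J. z * y \<in> T" using z by (simp add: v_op_def colon_def)
    then have "z * 1 \<in> T" "z * x \<in> T" using c1 cx by blast+
    then show "z \<in> J" by (simp add: J_def)
  qed
  have vmono: "v_op T A \<subseteq> v_op T B" if "A \<subseteq> B" for A B
    using that unfolding v_op_def colon_def by blast
  define P where "P = J \<inter> D"
  show "x \<in> T"
  proof (cases "1 \<in> star_f D st P")
    case True
    then obtain G where G: "G \<in> fgF D" "G \<subseteq> P" "1 \<in> st G" by (rule starf_memE)
    have GD: "G \<subseteq> D" using G by (auto simp: P_def)
    have "st G = st D" using ss_one[OF D st fgF_Fbar[OF G(1)] GD G(3)] .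
    then have eq: "t_op T (setprod G T) = t_op T T" using L G GD by (simp add: linked_def t_linked_def)
    have one_span: "span T {1} \<in> fgF T" using fgF_span[of "{1}" T 1] Ts by simp
    have "span T {1} \<subseteq> T" using span_sub[OF subring_submod[OF Ts(1)]] subring_1[OF Ts(1)] by blast
    moreover have "1 \<in> v_op T (span T {1})"
    proof -
      have "1 \<in> span T {1}" using span_mem[OF _ _ Ts(1), of "{1}" 1] by simp
      then show ?thesis by (auto simp: v_op_def colon_def)
    qed
    ultimately have "1 \<in> t_op T T" unfolding t_op_def using one_span by (blast intro: starf_memI)
    then have "1 \<in> star_f T (v_op T) (setprod G T)" using eq by (simp add: t_op_def)
    then obtain H where H: "H \<subseteq> setprod G T" "1 \<in> v_op T H" by (rule starf_memE)
    have "setprod G T \<subseteq> J"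
    proof (rule setprod_sub)
      fix g t assume "g \<in> G" "t \<in> T"
      then have "t * g \<in> J" using G submod_mult[OF Jsm, of t g] by (auto simp: P_def)
      then show "g * t \<in> J" by (simp add: mult.commute)
    qed (use Jsm submod_0 submod_add in auto)
    then have "1 \<in> v_op T J" using H vmono by blast
    then have "1 \<in> J" using vJ by blast
    then show ?thesis by (simp add: J_def)
  next
    case False
    have PI: "ideal_of D P" unfolding ideal_of_def submod_def P_def
      using Jsm Ts subring_mult[OF D] subring_add[OF D] subring_0[OF D]
      by (auto simp: submod_def)
    obtain a b where ab: "a \<in> D" "b \<in> D" "b \<noteq> 0" "x = a / b" using dq_frac[OF Dq, of x] by blast
    have "b \<in> P" using ab Ts by (auto simp: P_def J_def)
    then have Pnz: "P \<noteq> {0}" using ab by auto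
    obtain Q where Q: "quasi_max D (star_f D st) Q" "P \<subseteq> Q" using quasi_zorn[OF D st PI Pnz False] by blast
    note qf = qmax_facts[OF D st Q(1)]
    have M: "mclosed T (D - Q)" using mclosed_over[OF qf(2) Ts(2)] .
    define W where "W = fracs T (D - Q)"
    have Ws: "subring W" using fracs_subring[OF Ts(1) M] by (simp add: W_def)
    have TW: "T \<subseteq> W" using fracs_base[of "D - Q" T] M by (auto simp: W_def mclosed_def)
    have "fracs D (D - Q) \<subseteq> W" unfolding W_def by (rule fracs_mono) (use Ts in auto)
    then have VW: "valring W" using valring_mono[OF V[OF Q(1)]] Ws by simp
    have "x \<in> W" using valring_ic[OF VW integral_mono[OF x TW]] .
    then obtain t s where ts: "t \<in> T" "s \<in> D - Q" "x = t / s" unfolding W_def by (rule fracsE)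
    have "s \<noteq> 0" using ts qf(7) by auto
    then have "s * x = t" using ts by simp
    then have "s \<in> P" using ts Ts by (auto simp: P_def J_def)
    then show ?thesis using Q ts by auto
  qed
qed

section \<open>From the conditions to valuation localizations\<close>

lemma V_from:
  assumes Dq: "domain_with_qf D" and st: "semistar D st"
    and ic: "\<And>Q. quasi_max D (star_f D st) Q \<Longrightarrow> integrally_closed (fracs D (D - Q))"
    and sn: "\<And>Q T. quasi_max D (star_f D st) Q \<Longrightarrow> overring D T \<Longrightarrow> fracs D (D - Q) \<subseteq> T \<Longrightarrow> seminormal T"
    and Q: "quasi_max D (star_f D st) Q"
  shows "valring (fracs D (D - Q))"
proof -
  have D: "subring D" using Dq by (rule dq_subring)
  note qf = qmax_facts[OF D st Q]
  show ?thesis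
  proof (rule seminormal_valring[OF qf(3) loc_localr[OF D qf(1)] ic[OF Q]])
    fix T assume "overring (fracs D (D - Q)) T"
    then have "overring D T" "fracs D (D - Q) \<subseteq> T" using qf(4) by (auto simp: overring_def)
    then show "seminormal T" using sn[OF Q] by blast
  qed
qed

lemma ell_eq:
  assumes Dq: "domain_with_qf D" and st: "semistar D st" and Q: "quasi_max D (star_f D st) Q"
    and T: "overring D T" "fracs D (D - Q) \<subseteq> T"
  shows "ell_op D st T T = T"
proof -
  have D: "subring D" using Dq by (rule dq_subring)
  note qf = qmax_facts[OF D st Q]
  have Ts: "subring T" "D \<subseteq> T" using T by (auto simp: overring_def)
  have qp: "quasi_prime D (star_f D st) Q" using Q qf(1) by (simp add: quasi_prime_def quasi_max_def)
  have M: "mclosed T (D - Q)" using mclosed_over[OF qf(2) Ts(2)] .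
  have Ws: "subring (fracs T (D - Q))" using fracs_subring[OF Ts(1) M] .
  have TW: "T \<subseteq> fracs T (D - Q)" using fracs_base[of "D - Q" T] M by (auto simp: mclosed_def)
  have WT: "fracs T (D - Q) \<subseteq> T"
  proof
    fix z assume "z \<in> fracs T (D - Q)"
    then obtain t s where ts: "t \<in> T" "s \<in> D - Q" "z = t / s" by (rule fracsE)
    have "inverse s \<in> T" using fracs_inv[OF subring_1[OF D] ts(2)] T by blast
    then have "t * inverse s \<in> T" using ts subring_mult[OF Ts(1)] by blast
    then show "z \<in> T" using ts by (simp add: divide_inverse)
  qed
  have "ell_op D st T T \<subseteq> setprod T (fracs T (D - Q))" unfolding ell_op_def using qp by blast
  also have "\<dots> = fracs T (D - Q)" by (rule setprod_ring_eq[OF Ws TW subring_1[OF Ts(1)]])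
  finally have "ell_op D st T T \<subseteq> T" using WT by blast
  moreover have "T \<subseteq> ell_op D st T T" unfolding ell_op_def
  proof (rule Inter_greatest)
    fix X assume "X \<in> {setprod T (fracs T (D - P)) |P. quasi_prime D (star_f D st) P}"
    then obtain P where P: "X = setprod T (fracs T (D - P))" "quasi_prime D (star_f D st) P" by blast
    have "1 \<notin> P" using P ideal_one subring_1[OF D] by (auto simp: quasi_prime_def prime_of_def)
    then have one: "1 \<in> fracs T (D - P)" using subring_1[OF D] subring_1[OF Ts(1)] by (intro fracsI[of 1 T 1]) auto
    show "T \<subseteq> X"
    proof
      fix t assume "t \<in> T"
      then have "t * 1 \<in> setprod T (fracs T (D - P))" using one by (intro setprod_prod)
      then show "t \<in> X" using P by simp
    qed
  qed
  ultimately show ?thesis by blast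
qed

theorem theorem5p3:
  fixes D :: "'K::field set" and st :: "'K set \<Rightarrow> 'K set"
  assumes "domain_with_qf D" and "semistar D st"
  defines "c1 \<equiv> \<forall>T st'. overring D T \<and> semistar T st' \<and> linked D st T st'
                     \<longrightarrow> integrally_closed (stilde T st' T)"
      and "c2 \<equiv> \<forall>T. overring D T \<longrightarrow> integrally_closed (ell_op D st T T)"
      and "c3 \<equiv> \<forall>T. overring D T \<and> t_linked D st T \<longrightarrow> integrally_closed T"
      and "c4 \<equiv> \<forall>T. overring D T \<and> linked D st T (d_op T) \<longrightarrow> integrally_closed T"
      and "c5 \<equiv> integrally_closed (stilde D st D) \<and>
                 (\<forall>T st'. overring D T \<and> semistar T st' \<and> linked D st T st'
                     \<longrightarrow> seminormal (stilde T st' T))"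
      and "c6 \<equiv> integrally_closed (stilde D st D) \<and>
                 (\<forall>T. overring D T \<and> t_linked D st T \<longrightarrow> seminormal T)"
      and "c7 \<equiv> integrally_closed (stilde D st D) \<and>
                 (\<forall>T. overring D T \<and> linked D st T (d_op T) \<longrightarrow> seminormal T)"
      and "c8 \<equiv> PstarMD D st"
  shows "(c1 \<longleftrightarrow> c8) \<and> (c2 \<longleftrightarrow> c8) \<and> (c3 \<longleftrightarrow> c8) \<and> (c4 \<longleftrightarrow> c8)
       \<and> (c5 \<longleftrightarrow> c8) \<and> (c6 \<longleftrightarrow> c8) \<and> (c7 \<longleftrightarrow> c8)"
proof -
  have D: "subring D" using assms(1) by (rule dq_subring)
  note Dq = assms(1) and st = assms(2)
  define VV where "VV \<longleftrightarrow> (\<forall>Q. quasi_max D (star_f D st) Q \<longrightarrow> valring (fracs D (D - Q)))"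
  have c8V: "c8 \<Longrightarrow> VV" unfolding VV_def c8_def using PMD_val[OF Dq st] by blast
  have Vc8: "VV \<Longrightarrow> c8" unfolding VV_def c8_def using val_PMD[OF Dq st] by blast
  have Vc1: "VV \<Longrightarrow> c1" unfolding VV_def c1_def using c1_from_val[OF Dq st] by blast
  have Vc2: "VV \<Longrightarrow> c2" unfolding VV_def c2_def using c2_from_val[OF Dq st] by blast
  have Vc3: "VV \<Longrightarrow> c3" unfolding VV_def c3_def using c3_from_val[OF Dq st] by blast
  have c3c4: "c3 \<Longrightarrow> c4" unfolding c3_def c4_def using dlinked_tlinked by blast
  have ovD: "overring D D" using D by (simp add: overring_def)
  have c1sD: "c1 \<Longrightarrow> integrally_closed (stilde D st D)"
    unfolding c1_def using ovD st self_linked[OF D, of st] by blast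
  have c1c5: "c1 \<Longrightarrow> c5"
  proof -
    assume h: c1
    have "seminormal (stilde T st' T)" if "overring D T" "semistar T st'" "linked D st T st'" for T st'
    proof -
      have T: "subring T" using that by (simp add: overring_def)
      show ?thesis
      proof (rule ic_seminormal)
        show "integrally_closed (stilde T st' T)" using h that by (simp add: c1_def)
        show "- x \<in> stilde T st' T" if "x \<in> stilde T st' T" for x using stilde_uminus[OF T that] .
        show "0 \<in> stilde T st' T" "1 \<in> stilde T st' T"
          using stilde_base[OF T, of st'] subring_0[OF T] subring_1[OF T] by auto
      qed
    qed
    then show c5 using c1sD[OF h] by (simp add: c5_def)
  qed
  have Vc6: "VV \<Longrightarrow> c6"
  proof -
    assume h: VV
    have "seminormal T" if "overring D T" "t_linked D st T" for T
    proof -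
      have T: "subring T" using that by (simp add: overring_def)
      have "integrally_closed T" using Vc3[OF h] that by (simp add: c3_def)
      then show ?thesis by (rule ic_seminormal) (use T subring_uminus[OF T] subring_0[OF T] subring_1[OF T] in auto)
    qed
    then show c6 using c1sD[OF Vc1[OF h]] by (simp add: c6_def)
  qed
  have c6c7: "c6 \<Longrightarrow> c7" unfolding c6_def c7_def using dlinked_tlinked by blast
  have c5c7: "c5 \<Longrightarrow> c7"
  proof -
    assume h: c5
    have "seminormal T" if "overring D T" "linked D st T (d_op T)" for T
    proof -
      have T: "subring T" using that by (simp add: overring_def)
      have "seminormal (stilde T (d_op T) T)" using h that d_semistar[of T] by (simp add: c5_def)
      then show ?thesis using stilde_d[OF T ov_qf[OF Dq that(1)]] by simp
    qed
    then show c7 using h by (simp add: c5_def c7_def)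
  qed
  have c7V: "c7 \<Longrightarrow> VV"
  proof -
    assume h: c7
    have "valring (fracs D (D - Q))" if Q: "quasi_max D (star_f D st) Q" for Q
    proof (rule V_from[OF Dq st _ _ Q])
      fix Q' assume "quasi_max D (star_f D st) Q'"
      then show "integrally_closed (fracs D (D - Q'))" using loc_ic[OF D st] h by (simp add: c7_def)
    next
      fix Q' T assume "quasi_max D (star_f D st) Q'" "overring D T" "fracs D (D - Q') \<subseteq> T"
      then show "seminormal T" using loc_dlinked[OF D st] h by (simp add: c7_def)
    qed
    then show VV by (simp add: VV_def)
  qed
  have c4V: "c4 \<Longrightarrow> VV"
  proof -
    assume h: c4
    have "valring (fracs D (D - Q))" if Q: "quasi_max D (star_f D st) Q" for Q
    proof (rule V_from[OF Dq st _ _ Q])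
      fix Q' assume Q': "quasi_max D (star_f D st) Q'"
      note qf = qmax_facts[OF D st Q']
      have "overring D (fracs D (D - Q'))" using qf by (simp add: overring_def)
      then show "integrally_closed (fracs D (D - Q'))" using loc_dlinked[OF D st Q'] h by (simp add: c4_def)
    next
      fix Q' T assume QT: "quasi_max D (star_f D st) Q'" "overring D T" "fracs D (D - Q') \<subseteq> T"
      have T: "subring T" using QT by (simp add: overring_def)
      have "integrally_closed T" using loc_dlinked[OF D st QT] QT h by (simp add: c4_def)
      then show "seminormal T" by (rule ic_seminormal) (use T subring_uminus[OF T] subring_0[OF T] subring_1[OF T] in auto)
    qed
    then show VV by (simp add: VV_def)
  qed
  have c2V: "c2 \<Longrightarrow> VV"
  proof -
    assume h: c2
    have "valring (fracs D (D - Q))" if Q: "quasi_max D (star_f D st) Q" for Q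
    proof (rule V_from[OF Dq st _ _ Q])
      fix Q' assume Q': "quasi_max D (star_f D st) Q'"
      note qf = qmax_facts[OF D st Q']
      have ov: "overring D (fracs D (D - Q'))" using qf by (simp add: overring_def)
      then have "integrally_closed (ell_op D st (fracs D (D - Q')) (fracs D (D - Q')))" using h by (simp add: c2_def)
      then show "integrally_closed (fracs D (D - Q'))" using ell_eq[OF Dq st Q' ov] by simp
    next
      fix Q' T assume QT: "quasi_max D (star_f D st) Q'" "overring D T" "fracs D (D - Q') \<subseteq> T"
      have T: "subring T" using QT by (simp add: overring_def)
      have "integrally_closed (ell_op D st T T)" using h QT by (simp add: c2_def)
      then have "integrally_closed T" using ell_eq[OF Dq st QT] by simp
      then show "seminormal T" by (rule ic_seminormal) (use T subring_uminus[OF T] subring_0[OF T] subring_1[OF T] in auto)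
    qed
    then show VV by (simp add: VV_def)
  qed
  show ?thesis
    using c8V Vc8 Vc1 Vc2 Vc3 c3c4 c1c5 Vc6 c6c7 c5c7 c7V c4V c2V by blast
qed

end
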